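(* Let $(M,g)$ be a Riemannian manifold, $\lambda\in\mathbb{R}$, $X$ a smooth vector field and $\Gamma:M\to(0,\infty)$ any smooth positive function, and define the vector field $K$ by $K_a=\Gamma X_a+\nabla_a\Gamma$. Suppose $R_{ab}=\tfrac12X_aX_b-\nabla_{(a}X_{b)}+\lambda g_{ab}$ holds (equivalently $R_{ab}=\frac{K_aK_b}{2\Gamma^2}-\frac{\nabla_a\Gamma\nabla_b\Gamma}{2\Gamma^2}-\frac1\Gamma\nabla_{(a}K_{b)}+\frac1\Gamma\nabla_a\nabla_b\Gamma+\lambda g_{ab}$). Then $$\nabla_{(a}K_{b)}\nabla^aK^b=\nabla^a\Big(K^b\nabla_{(a}K_{b)}-\tfrac12K_a\Delta\Gamma-\tfrac12K_a\nabla_bK^b-\lambda\Gamma K_a\Big)+\nabla_bK^b\Big(-\frac{|K|^2}{2\Gamma}+\tfrac12\Delta\Gamma+\tfrac12\nabla_cK^c+\frac{1}{2\Gamma}K^c\nabla_c\Gamma+\lambda\Gamma\Big).$$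
   Context: $\nabla$ is the Levi-Civita connection of $g$, $R_{ab}$ its Ricci tensor, $\Delta=\nabla^a\nabla_a$, $|\cdot|$ the $g$-norm; indices are raised and lowered with $g$, and $(ab)$ denotes symmetrisation with weight $1/2$. *)

theory Defs
  imports "HOL-Analysis.Analysis"
begin

text \<open>Local coordinate rendering of Riemannian geometry. Covector fields are
  functions real^'n \<Rightarrow> 'n \<Rightarrow> real (components with lowered index).\<close>

definition pd :: "'n::finite \<Rightarrow> (real^'n \<Rightarrow> real) \<Rightarrow> real^'n \<Rightarrow> real" where
  "pd i f x = frechet_derivative f (at x) (axis i 1)"

fun iter_pd :: "('n::finite) list \<Rightarrow> (real^'n \<Rightarrow> real) \<Rightarrow> real^'n \<Rightarrow> real" where
  "iter_pd [] f = f"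
| "iter_pd (i # is) f = pd i (iter_pd is f)"

definition smooth_on :: "(real^'n::finite) set \<Rightarrow> (real^'n \<Rightarrow> real) \<Rightarrow> bool" where
  "smooth_on U f \<longleftrightarrow> (\<forall>is. iter_pd is f differentiable_on U)"

definition riemannian_metric ::
  "(real^'n::finite) set \<Rightarrow> (real^'n \<Rightarrow> 'n \<Rightarrow> 'n \<Rightarrow> real) \<Rightarrow> bool" where
  "riemannian_metric U g \<longleftrightarrow> open U \<and>
     (\<forall>i j. smooth_on U (\<lambda>x. g x i j)) \<and>
     (\<forall>x\<in>U. \<forall>i j. g x i j = g x j i) \<and>
     (\<forall>x\<in>U. \<forall>v::'n \<Rightarrow> real. v \<noteq> (\<lambda>_. 0) \<longrightarrow> (\<Sum>i\<in>UNIV. \<Sum>j\<in>UNIV. g x i j * v i * v j) > 0)"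

definition ginv :: "(real^'n::finite \<Rightarrow> 'n \<Rightarrow> 'n \<Rightarrow> real) \<Rightarrow> real^'n \<Rightarrow> 'n \<Rightarrow> 'n \<Rightarrow> real" where
  "ginv g x i j = matrix_inv (\<chi> a b. g x a b) $ i $ j"

definition christoffel ::
  "(real^'n::finite \<Rightarrow> 'n \<Rightarrow> 'n \<Rightarrow> real) \<Rightarrow> real^'n \<Rightarrow> 'n \<Rightarrow> 'n \<Rightarrow> 'n \<Rightarrow> real" where
  "christoffel g x k i j = (1/2) * (\<Sum>l\<in>UNIV. ginv g x k l *
     (pd i (\<lambda>y. g y j l) x + pd j (\<lambda>y. g y i l) x - pd l (\<lambda>y. g y i j) x))"

definition ricci ::
  "(real^'n::finite \<Rightarrow> 'n \<Rightarrow> 'n \<Rightarrow> real) \<Rightarrow> real^'n \<Rightarrow> 'n \<Rightarrow> 'n \<Rightarrow> real" where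
  "ricci g x i j = (\<Sum>k\<in>UNIV. pd k (\<lambda>y. christoffel g y k i j) x - pd j (\<lambda>y. christoffel g y k k i) x
     + (\<Sum>l\<in>UNIV. christoffel g x k k l * christoffel g x l i j - christoffel g x k j l * christoffel g x l k i))"

definition cov_d ::
  "(real^'n::finite \<Rightarrow> 'n \<Rightarrow> 'n \<Rightarrow> real) \<Rightarrow> (real^'n \<Rightarrow> 'n \<Rightarrow> real) \<Rightarrow> real^'n \<Rightarrow> 'n \<Rightarrow> 'n \<Rightarrow> real" where
  "cov_d g V x i j = pd i (\<lambda>y. V y j) x - (\<Sum>k\<in>UNIV. christoffel g x k i j * V x k)"

definition sym_cov_d ::
  "(real^'n::finite \<Rightarrow> 'n \<Rightarrow> 'n \<Rightarrow> real) \<Rightarrow> (real^'n \<Rightarrow> 'n \<Rightarrow> real) \<Rightarrow> real^'n \<Rightarrow> 'n \<Rightarrow> 'n \<Rightarrow> real" where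
  "sym_cov_d g V x i j = (cov_d g V x i j + cov_d g V x j i) / 2"

definition divg ::
  "(real^'n::finite \<Rightarrow> 'n \<Rightarrow> 'n \<Rightarrow> real) \<Rightarrow> (real^'n \<Rightarrow> 'n \<Rightarrow> real) \<Rightarrow> real^'n \<Rightarrow> real" where
  "divg g V x = (\<Sum>i\<in>UNIV. \<Sum>j\<in>UNIV. ginv g x i j * cov_d g V x i j)"

definition grad :: "(real^'n::finite \<Rightarrow> real) \<Rightarrow> real^'n \<Rightarrow> 'n \<Rightarrow> real" where
  "grad f x i = pd i f x"

definition laplacian ::
  "(real^'n::finite \<Rightarrow> 'n \<Rightarrow> 'n \<Rightarrow> real) \<Rightarrow> (real^'n \<Rightarrow> real) \<Rightarrow> real^'n \<Rightarrow> real" where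
  "laplacian g f x = divg g (grad f) x"

definition raise ::
  "(real^'n::finite \<Rightarrow> 'n \<Rightarrow> 'n \<Rightarrow> real) \<Rightarrow> (real^'n \<Rightarrow> 'n \<Rightarrow> real) \<Rightarrow> real^'n \<Rightarrow> 'n \<Rightarrow> real" where
  "raise g V x a = (\<Sum>b\<in>UNIV. ginv g x a b * V x b)"

end

theory Submission
  imports Defs
begin


section \<open>Calculus of partial derivatives\<close>

lemma pd_has: "(f has_derivative D) (at x) \<Longrightarrow> pd i f x = D (axis i 1)"
  unfolding pd_def using frechet_derivative_at by metis

lemma has_pd: "f differentiable (at x) \<Longrightarrow> (f has_derivative frechet_derivative f (at x)) (at x)"
  using frechet_derivative_works by blast

lemma pd_local:
  assumes "open U" "x \<in> U" "\<And>y. y \<in> U \<Longrightarrow> f y = h y"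
  shows "pd i f x = pd i h x"
proof -
  have "\<And>D. (f has_derivative D) (at x) \<longleftrightarrow> (h has_derivative D) (at x)"
    using has_derivative_transform_within_open[where s=U and x=x and f=f and g=h] 
      has_derivative_transform_within_open[where s=U and x=x and f=h and g=f] assms
    by metis
  then show ?thesis unfolding pd_def frechet_derivative_def by simp
qed

lemma iter_pd_local:
  assumes "open U" "\<And>y. y \<in> U \<Longrightarrow> f y = h y"
  shows "y \<in> U \<Longrightarrow> iter_pd xs f y = iter_pd xs h y"
proof (induction xs arbitrary: y)
  case Nil then show ?case using assms by simp
next
  case (Cons i xs) then show ?case using pd_local[OF assms(1) Cons.prems, of "iter_pd xs f" "iter_pd xs h"] by simp
qed

lemma diff_on_cong:
  assumes "open U" "\<And>y. y \<in> U \<Longrightarrow> f y = h y" "f differentiable_on U"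
  shows "h differentiable_on U"
proof -
  have "h differentiable at y" if "y \<in> U" for y
  proof -
    from assms(3) that obtain D where "(f has_derivative D) (at y)"
      using differentiable_on_eq_differentiable_at[OF assms(1)] differentiable_def by blast
    then have "(h has_derivative D) (at y)"
      using has_derivative_transform_within_open[where s=U and f=f and g=h] assms(1,2) that by blast
    then show ?thesis using differentiable_def by blast
  qed
  then show ?thesis using differentiable_on_eq_differentiable_at[OF assms(1)] by blast
qed

lemma iter_pd_snoc: "iter_pd (is @ [i]) f = iter_pd is (pd i f)"
  by (induction "is") auto

definition sm :: "(real^'n::finite) set \<Rightarrow> nat \<Rightarrow> (real^'n \<Rightarrow> real) \<Rightarrow> bool" where
  "sm U n f \<longleftrightarrow> (\<forall>is. length is \<le> n \<longrightarrow> iter_pd is f differentiable_on U)"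

lemma smooth_on_sm: "smooth_on U f \<longleftrightarrow> (\<forall>n. sm U n f)"
  unfolding smooth_on_def sm_def by auto

lemma sm_0: "sm U 0 f \<longleftrightarrow> f differentiable_on U"
  unfolding sm_def by auto

lemma sm_Suc: "sm U (Suc n) f \<longleftrightarrow> f differentiable_on U \<and> (\<forall>i. sm U n (pd i f))"
proof
  assume a: "sm U (Suc n) f"
  show "f differentiable_on U \<and> (\<forall>i. sm U n (pd i f))"
  proof
    show "f differentiable_on U" using a[unfolded sm_def, rule_format, of "[]"] by simp
    show "\<forall>i. sm U n (pd i f)" unfolding sm_def
    proof (intro allI impI)
      fix i and xs :: "'a list" assume "length xs \<le> n"
      then show "iter_pd xs (pd i f) differentiable_on U"
        using a[unfolded sm_def, rule_format, of "xs @ [i]"] by (simp add: iter_pd_snoc)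
    qed
  qed
next
  assume a: "f differentiable_on U \<and> (\<forall>i. sm U n (pd i f))"
  show "sm U (Suc n) f" unfolding sm_def
  proof (intro allI impI)
    fix "is" :: "'a list" assume l: "length is \<le> Suc n"
    show "iter_pd is f differentiable_on U"
    proof (cases "is" rule: rev_cases)
      case Nil then show ?thesis using a by simp
    next
      case (snoc js j) then show ?thesis using a l unfolding sm_def by (simp add: iter_pd_snoc)
    qed
  qed
qed

lemma sm_mono: "sm U n f \<Longrightarrow> m \<le> n \<Longrightarrow> sm U m f"
  unfolding sm_def by auto

lemma sm_cong:
  assumes "open U" "\<And>y. y \<in> U \<Longrightarrow> f y = h y" "sm U n f"
  shows "sm U n h"
  unfolding sm_def
proof (intro allI impI)
  fix xs :: "'a list" assume "length xs \<le> n"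
  then have "iter_pd xs f differentiable_on U" using assms(3) unfolding sm_def by blast
  then show "iter_pd xs h differentiable_on U"
    by (rule diff_on_cong[OF assms(1), rotated]) (rule iter_pd_local[OF assms(1,2)])
qed

lemma sm_diff_at: "sm U n f \<Longrightarrow> open U \<Longrightarrow> x \<in> U \<Longrightarrow> f differentiable (at x)"
proof -
  assume "sm U n f" "open U" "x \<in> U"
  then have "iter_pd [] f differentiable_on U" unfolding sm_def by (metis le0 list.size(3))
  then show ?thesis using differentiable_on_eq_differentiable_at[OF \<open>open U\<close>] \<open>x \<in> U\<close> by auto
qed

lemma pd_add: assumes "f differentiable (at x)" "h differentiable (at x)"
  shows "pd i (\<lambda>y. f y + h y) x = pd i f x + pd i h x"
proof -
  have "((\<lambda>y. f y + h y) has_derivative (\<lambda>v. frechet_derivative f (at x) v + frechet_derivative h (at x) v)) (at x)"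
    by (intro has_derivative_add has_pd assms)
  from pd_has[OF this] show ?thesis unfolding pd_def by simp
qed

lemma pd_diff: assumes "f differentiable (at x)" "h differentiable (at x)"
  shows "pd i (\<lambda>y. f y - h y) x = pd i f x - pd i h x"
proof -
  have "((\<lambda>y. f y - h y) has_derivative (\<lambda>v. frechet_derivative f (at x) v - frechet_derivative h (at x) v)) (at x)"
    by (intro has_derivative_diff has_pd assms)
  from pd_has[OF this] show ?thesis unfolding pd_def by simp
qed

lemma pd_minus: assumes "f differentiable (at x)"
  shows "pd i (\<lambda>y. - f y) x = - pd i f x"
proof -
  have "((\<lambda>y. - f y) has_derivative (\<lambda>v. - frechet_derivative f (at x) v)) (at x)"
    by (intro has_derivative_minus has_pd assms)
  from pd_has[OF this] show ?thesis unfolding pd_def by simp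
qed

lemma pd_mult: assumes "f differentiable (at x)" "h differentiable (at x)"
  shows "pd i (\<lambda>y. f y * h y) x = pd i f x * h x + f x * pd i h x"
proof -
  have "((\<lambda>y. f y * h y) has_derivative (\<lambda>v. f x * frechet_derivative h (at x) v + frechet_derivative f (at x) v * h x)) (at x)"
    by (intro has_derivative_mult has_pd assms)
  from pd_has[OF this] show ?thesis unfolding pd_def by simp
qed

lemma pd_cmult: assumes "f differentiable (at x)"
  shows "pd i (\<lambda>y. c * f y) x = c * pd i f x"
proof -
  have "((\<lambda>y. c * f y) has_derivative (\<lambda>v. c * frechet_derivative f (at x) v)) (at x)"
    by (intro has_derivative_mult_right has_pd assms)
  from pd_has[OF this] show ?thesis unfolding pd_def by simp
qed

lemma pd_const: "pd i (\<lambda>y. c) x = 0"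
  unfolding pd_def by simp

lemma pd_sum: assumes "\<And>a. a \<in> A \<Longrightarrow> f a differentiable (at x)"
  shows "pd i (\<lambda>y. \<Sum>a\<in>A. f a y) x = (\<Sum>a\<in>A. pd i (f a) x)"
proof -
  have "((\<lambda>y. \<Sum>a\<in>A. f a y) has_derivative (\<lambda>v. \<Sum>a\<in>A. frechet_derivative (f a) (at x) v)) (at x)"
    by (intro has_derivative_sum has_pd assms)
  from pd_has[OF this] show ?thesis unfolding pd_def by simp
qed

lemma pd_inverse: assumes d: "f differentiable (at x)" and nz: "f x \<noteq> 0"
  shows "pd i (\<lambda>y. 1 / f y) x = - pd i f x * (1 / f x) * (1 / f x)"
proof -
  have "((\<lambda>y. inverse (f y)) has_derivative
     (\<lambda>h. - (inverse (f x) * frechet_derivative f (at x) h * inverse (f x)))) (at x)"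
    by (rule Deriv.has_derivative_inverse[OF nz has_pd[OF d]])
  from pd_has[OF this] show ?thesis unfolding pd_def by (simp add: divide_inverse)
qed

context
  fixes U :: "(real^'n::finite) set"
  assumes opnU: "open U"
begin

lemma sm_const: "sm U n (\<lambda>y. c)"
proof (induction n arbitrary: c)
  case 0 then show ?case by (simp add: sm_0)
next
  case (Suc n)
  have pc: "\<And>i. pd i (\<lambda>y::real^'n. c) = (\<lambda>y. 0)" by (rule ext) (simp add: pd_const)
  show ?case using Suc by (simp add: sm_Suc pc)
qed

lemma sm_add: "sm U n f \<Longrightarrow> sm U n h \<Longrightarrow> sm U n (\<lambda>y. f y + h y)"
proof (induction n arbitrary: f h)
  case 0 then show ?case by (simp add: sm_0)
next
  case (Suc n)
  show ?case unfolding sm_Suc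
  proof (intro conjI allI)
    show "(\<lambda>y. f y + h y) differentiable_on U" using Suc.prems by (simp add: sm_Suc)
    fix i
    have "sm U n (\<lambda>y. pd i f y + pd i h y)" using Suc by (simp add: sm_Suc)
    then show "sm U n (pd i (\<lambda>y. f y + h y))"
      by (rule sm_cong[OF opnU, rotated])
         (simp add: pd_add[OF sm_diff_at[OF Suc.prems(1) opnU] sm_diff_at[OF Suc.prems(2) opnU]])
  qed
qed

lemma sm_minus: "sm U n f \<Longrightarrow> sm U n (\<lambda>y. - f y)"
proof (induction n arbitrary: f)
  case 0 then show ?case by (simp add: sm_0 differentiable_on_minus)
next
  case (Suc n)
  show ?case unfolding sm_Suc
  proof (intro conjI allI)
    show "(\<lambda>y. - f y) differentiable_on U" using Suc.prems by (simp add: sm_Suc)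
    fix i
    have "sm U n (\<lambda>y. - pd i f y)" using Suc by (simp add: sm_Suc)
    then show "sm U n (pd i (\<lambda>y. - f y))"
      by (rule sm_cong[OF opnU, rotated]) (simp add: pd_minus[OF sm_diff_at[OF Suc.prems(1) opnU]])
  qed
qed

lemma sm_diff: "sm U n f \<Longrightarrow> sm U n h \<Longrightarrow> sm U n (\<lambda>y. f y - h y)"
  using sm_add[of n f "\<lambda>y. - h y"] sm_minus[of n h] by simp

lemma sm_mult: "sm U n f \<Longrightarrow> sm U n h \<Longrightarrow> sm U n (\<lambda>y. f y * h y)"
proof (induction n arbitrary: f h)
  case 0 then show ?case by (simp add: sm_0)
next
  case (Suc n)
  show ?case unfolding sm_Suc
  proof (intro conjI allI)
    show "(\<lambda>y. f y * h y) differentiable_on U" using Suc.prems by (simp add: sm_Suc)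
    fix i
    have f1: "sm U n (pd i f)" "sm U n (pd i h)" using Suc.prems by (simp_all add: sm_Suc)
    have f2: "sm U n f" "sm U n h" using Suc.prems sm_mono[of U "Suc n" _ n] by auto
    have "sm U n (\<lambda>y. pd i f y * h y + f y * pd i h y)"
      by (rule sm_add[OF Suc.IH[OF f1(1) f2(2)] Suc.IH[OF f2(1) f1(2)]])
    then show "sm U n (pd i (\<lambda>y. f y * h y))"
      by (rule sm_cong[OF opnU, rotated]) (simp add: pd_mult[OF sm_diff_at[OF Suc.prems(1) opnU] sm_diff_at[OF Suc.prems(2) opnU]])
  qed
qed

lemma sm_sum: "finite A \<Longrightarrow> (\<And>a. a \<in> A \<Longrightarrow> sm U n (f a)) \<Longrightarrow> sm U n (\<lambda>y. \<Sum>a\<in>A. f a y)"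
  by (induction A rule: finite_induct) (simp_all add: sm_add sm_const)

lemma sm_prod: "finite A \<Longrightarrow> (\<And>a. a \<in> A \<Longrightarrow> sm U n (f a)) \<Longrightarrow> sm U n (\<lambda>y. \<Prod>a\<in>A. f a y)"
  by (induction A rule: finite_induct) (simp_all add: sm_mult sm_const)

lemma sm_inverse: "sm U n f \<Longrightarrow> (\<And>y. y \<in> U \<Longrightarrow> f y \<noteq> 0) \<Longrightarrow> sm U n (\<lambda>y. 1 / f y)"
proof (induction n)
  case 0 then show ?case
    by (simp add: sm_0 differentiable_on_def differentiable_divide)
next
  case (Suc n)
  have IH: "sm U n (\<lambda>y. 1 / f y)" by (rule Suc.IH[OF sm_mono[OF Suc.prems(1)] Suc.prems(2)]) auto
  show ?case unfolding sm_Suc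
  proof (intro conjI allI)
    show "(\<lambda>y. 1 / f y) differentiable_on U" using IH[unfolded sm_def, rule_format, of "[]"] by simp
    fix i
    have f1: "sm U n (pd i f)" using Suc.prems by (simp add: sm_Suc)
    have "sm U n (\<lambda>y. - pd i f y * (1 / f y) * (1 / f y))"
      by (rule sm_mult[OF sm_mult[OF sm_minus[OF f1] IH] IH])
    then show "sm U n (pd i (\<lambda>y. 1 / f y))"
      by (rule sm_cong[OF opnU, rotated]) (simp add: pd_inverse[OF sm_diff_at[OF Suc.prems(1) opnU]] Suc.prems(2))
  qed
qed

lemma smooth_add: "smooth_on U f \<Longrightarrow> smooth_on U h \<Longrightarrow> smooth_on U (\<lambda>y. f y + h y)"
  by (simp add: smooth_on_sm sm_add)
lemma smooth_diff: "smooth_on U f \<Longrightarrow> smooth_on U h \<Longrightarrow> smooth_on U (\<lambda>y. f y - h y)"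
  by (simp add: smooth_on_sm sm_diff)
lemma smooth_minus: "smooth_on U f \<Longrightarrow> smooth_on U (\<lambda>y. - f y)"
  by (simp add: smooth_on_sm sm_minus)
lemma smooth_mult: "smooth_on U f \<Longrightarrow> smooth_on U h \<Longrightarrow> smooth_on U (\<lambda>y. f y * h y)"
  by (simp add: smooth_on_sm sm_mult)
lemma smooth_const: "smooth_on U (\<lambda>y. c)"
  by (simp add: smooth_on_sm sm_const)
lemma smooth_sum: "finite A \<Longrightarrow> (\<And>a. a \<in> A \<Longrightarrow> smooth_on U (f a)) \<Longrightarrow> smooth_on U (\<lambda>y. \<Sum>a\<in>A. f a y)"
  by (simp add: smooth_on_sm sm_sum)
lemma smooth_prod: "finite A \<Longrightarrow> (\<And>a. a \<in> A \<Longrightarrow> smooth_on U (f a)) \<Longrightarrow> smooth_on U (\<lambda>y. \<Prod>a\<in>A. f a y)"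
  by (simp add: smooth_on_sm sm_prod)
lemma smooth_inverse: "smooth_on U f \<Longrightarrow> (\<And>y. y \<in> U \<Longrightarrow> f y \<noteq> 0) \<Longrightarrow> smooth_on U (\<lambda>y. 1 / f y)"
  by (simp add: smooth_on_sm sm_inverse)
lemma smooth_pd: assumes "smooth_on U f" shows "smooth_on U (pd i f)"
  unfolding smooth_on_def
proof
  fix xs show "iter_pd xs (pd i f) differentiable_on U"
    using assms[unfolded smooth_on_def, rule_format, of "xs @ [i]"] by (simp add: iter_pd_snoc)
qed
lemma smooth_diff_at: "smooth_on U f \<Longrightarrow> x \<in> U \<Longrightarrow> f differentiable (at x)"
  using sm_diff_at[OF _ opnU, of 0 f x] smooth_on_sm[of U f] by simp
lemma smooth_cong: "smooth_on U f \<Longrightarrow> (\<And>y. y \<in> U \<Longrightarrow> f y = h y) \<Longrightarrow> smooth_on U h"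
  using sm_cong[OF opnU, of f h] smooth_on_sm[of U f] smooth_on_sm[of U h] by simp

end


section \<open>Symmetry of second partial derivatives\<close>

lemma line_deriv:
  assumes "f differentiable (at (z + t *\<^sub>R e))"
  shows "((\<lambda>t. f (z + t *\<^sub>R e)) has_real_derivative frechet_derivative f (at (z + t *\<^sub>R e)) e) (at t)"
proof -
  let ?D = "frechet_derivative f (at (z + t *\<^sub>R e))"
  have l: "((\<lambda>t. z + t *\<^sub>R e) has_derivative (\<lambda>s. s *\<^sub>R e)) (at t)"
    by (intro derivative_eq_intros) auto
  have "((\<lambda>t. f (z + t *\<^sub>R e)) has_derivative (\<lambda>s. ?D (s *\<^sub>R e))) (at t)"
    using has_derivative_compose[OF l has_pd[OF assms]] by (simp add: o_def)
  moreover have "bounded_linear ?D" using has_pd[OF assms] has_derivative_bounded_linear by blast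
  then have "(\<lambda>s. ?D (s *\<^sub>R e)) = (*) (?D e)"
    by (auto simp: fun_eq_iff linear_simps)
  ultimately show ?thesis unfolding has_field_derivative_def by simp
qed

lemma mixed_mvt:
  fixes f :: "real^'n::finite \<Rightarrow> real"
  assumes opn: "open U" and sm: "smooth_on U f" and bal: "ball x r \<subseteq> U" and h: "0 < h" "2 * h < r"
  shows "\<exists>\<xi>. dist \<xi> x < 2 * h \<and>
    f (x + h *\<^sub>R axis i 1 + h *\<^sub>R axis j 1) - f (x + h *\<^sub>R axis i 1) - f (x + h *\<^sub>R axis j 1) + f x
     = h * h * pd j (pd i f) \<xi>"
proof -
  let ?e = "axis i (1::real)" and ?d = "axis j (1::real)"
  have inU: "x + s *\<^sub>R ?e + t *\<^sub>R ?d \<in> U" if "0 \<le> s" "s \<le> h" "0 \<le> t" "t \<le> h" for s t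
  proof -
    have "norm (s *\<^sub>R ?e + t *\<^sub>R ?d) \<le> norm (s *\<^sub>R ?e) + norm (t *\<^sub>R ?d)" by (rule norm_triangle_ineq)
    also have "\<dots> = s + t" using that by simp
    moreover have "x - (x + s *\<^sub>R ?e + t *\<^sub>R ?d) = - (s *\<^sub>R ?e + t *\<^sub>R ?d)" by (simp add: algebra_simps)
    ultimately have "dist x (x + s *\<^sub>R ?e + t *\<^sub>R ?d) < r" using that h by (simp only: dist_norm norm_minus_cancel)
    then show ?thesis using bal by auto
  qed
  have dd: "\<And>y. y \<in> U \<Longrightarrow> g differentiable (at y)" if "smooth_on U g" for g
    using smooth_diff_at[OF opn that] by blast
  have sm1: "smooth_on U (pd i f)" using smooth_pd[OF opn sm] .
  have sm2: "smooth_on U (pd j (pd i f))" using smooth_pd[OF opn sm1] .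
  define \<phi> where "\<phi> t = f (x + h *\<^sub>R ?d + t *\<^sub>R ?e) - f (x + t *\<^sub>R ?e)" for t
  have der\<phi>: "(\<phi> has_real_derivative (pd i f (x + h *\<^sub>R ?d + t *\<^sub>R ?e) - pd i f (x + t *\<^sub>R ?e))) (at t)"
    if "0 \<le> t" "t \<le> h" for t
  proof -
    have a: "x + h *\<^sub>R ?d + t *\<^sub>R ?e \<in> U" using inU[of t h] that h by (simp add: algebra_simps)
    have b: "x + t *\<^sub>R ?e \<in> U" using inU[of t 0] that h by simp
    have 1: "((\<lambda>t. f (x + h *\<^sub>R ?d + t *\<^sub>R ?e)) has_real_derivative pd i f (x + h *\<^sub>R ?d + t *\<^sub>R ?e)) (at t)"
      unfolding pd_def by (rule line_deriv) (rule dd[OF sm a])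
    have 2: "((\<lambda>t. f (x + t *\<^sub>R ?e)) has_real_derivative pd i f (x + t *\<^sub>R ?e)) (at t)"
      unfolding pd_def by (rule line_deriv) (rule dd[OF sm b])
    show ?thesis unfolding \<phi>_def by (rule DERIV_diff[OF 1 2])
  qed
  obtain s where s: "0 < s" "s < h" "\<phi> h - \<phi> 0 = (h - 0) * (pd i f (x + h *\<^sub>R ?d + s *\<^sub>R ?e) - pd i f (x + s *\<^sub>R ?e))"
    using MVT2[of 0 h \<phi> "\<lambda>t. pd i f (x + h *\<^sub>R ?d + t *\<^sub>R ?e) - pd i f (x + t *\<^sub>R ?e)", OF h(1) der\<phi>] by auto
  define \<psi> where "\<psi> t = pd i f (x + s *\<^sub>R ?e + t *\<^sub>R ?d)" for t
  have der\<psi>: "(\<psi> has_real_derivative pd j (pd i f) (x + s *\<^sub>R ?e + t *\<^sub>R ?d)) (at t)"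
    if "0 \<le> t" "t \<le> h" for t
  proof -
    have a: "x + s *\<^sub>R ?e + t *\<^sub>R ?d \<in> U" using inU[of s t] that s by simp
    show ?thesis unfolding \<psi>_def pd_def[of j] by (rule line_deriv) (rule dd[OF sm1 a])
  qed
  obtain \<sigma> where \<sigma>: "0 < \<sigma>" "\<sigma> < h" "\<psi> h - \<psi> 0 = (h - 0) * pd j (pd i f) (x + s *\<^sub>R ?e + \<sigma> *\<^sub>R ?d)"
    using MVT2[of 0 h \<psi> "\<lambda>t. pd j (pd i f) (x + s *\<^sub>R ?e + t *\<^sub>R ?d)", OF h(1) der\<psi>] by auto
  have "norm (s *\<^sub>R ?e + \<sigma> *\<^sub>R ?d) \<le> norm (s *\<^sub>R ?e) + norm (\<sigma> *\<^sub>R ?d)" by (rule norm_triangle_ineq)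
  also have "\<dots> = s + \<sigma>" using s \<sigma> by simp
  moreover have "(x + s *\<^sub>R ?e + \<sigma> *\<^sub>R ?d) - x = s *\<^sub>R ?e + \<sigma> *\<^sub>R ?d" by (simp add: algebra_simps)
  ultimately have dist: "dist (x + s *\<^sub>R ?e + \<sigma> *\<^sub>R ?d) x < 2 * h" using s \<sigma> by (simp only: dist_norm)
  have "f (x + h *\<^sub>R ?e + h *\<^sub>R ?d) - f (x + h *\<^sub>R ?e) - f (x + h *\<^sub>R ?d) + f x = \<phi> h - \<phi> 0"
    unfolding \<phi>_def by (simp add: algebra_simps)
  also have "\<dots> = h * (\<psi> h - \<psi> 0)" using s unfolding \<psi>_def by (simp add: algebra_simps)
  also have "\<dots> = h * h * pd j (pd i f) (x + s *\<^sub>R ?e + \<sigma> *\<^sub>R ?d)" using \<sigma> by simp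
  finally show ?thesis using dist by blast
qed

lemma clairaut:
  fixes f :: "real^'n::finite \<Rightarrow> real"
  assumes opn: "open U" and sm: "smooth_on U f" and x: "x \<in> U"
  shows "pd i (pd j f) x = pd j (pd i f) x"
proof (rule ccontr)
  assume ne: "pd i (pd j f) x \<noteq> pd j (pd i f) x"
  define \<epsilon> where "\<epsilon> = \<bar>pd i (pd j f) x - pd j (pd i f) x\<bar> / 2"
  have \<epsilon>: "\<epsilon> > 0" using ne by (simp add: \<epsilon>_def)
  obtain r where r: "r > 0" "ball x r \<subseteq> U" using opn x open_contains_ball by blast
  have c1: "continuous (at x) (pd i (pd j f))"
    using smooth_diff_at[OF opn smooth_pd[OF opn smooth_pd[OF opn sm]] x] differentiable_imp_continuous_within by blast
  have c2: "continuous (at x) (pd j (pd i f))"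
    using smooth_diff_at[OF opn smooth_pd[OF opn smooth_pd[OF opn sm]] x] differentiable_imp_continuous_within by blast
  obtain d1 where d1: "d1 > 0" "\<And>y. dist y x < d1 \<Longrightarrow> dist (pd i (pd j f) y) (pd i (pd j f) x) < \<epsilon>"
    using c1 \<epsilon> unfolding continuous_at_eps_delta by blast
  obtain d2 where d2: "d2 > 0" "\<And>y. dist y x < d2 \<Longrightarrow> dist (pd j (pd i f) y) (pd j (pd i f) x) < \<epsilon>"
    using c2 \<epsilon> unfolding continuous_at_eps_delta by blast
  define h where "h = min r (min d1 d2) / 4"
  have h: "0 < h" "2 * h < r" "2 * h < d1" "2 * h < d2" using r d1 d2 by (auto simp: h_def)
  obtain \<xi> where \<xi>: "dist \<xi> x < 2 * h"
    "f (x + h *\<^sub>R axis i 1 + h *\<^sub>R axis j 1) - f (x + h *\<^sub>R axis i 1) - f (x + h *\<^sub>R axis j 1) + f x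
     = h * h * pd j (pd i f) \<xi>"
    using mixed_mvt[OF opn sm r(2) h(1,2), of i j] by blast
  obtain \<eta> where \<eta>: "dist \<eta> x < 2 * h"
    "f (x + h *\<^sub>R axis j 1 + h *\<^sub>R axis i 1) - f (x + h *\<^sub>R axis j 1) - f (x + h *\<^sub>R axis i 1) + f x
     = h * h * pd i (pd j f) \<eta>"
    using mixed_mvt[OF opn sm r(2) h(1,2), of j i] by blast
  have "h * h * pd j (pd i f) \<xi> = h * h * pd i (pd j f) \<eta>"
    using \<xi>(2) \<eta>(2) by (simp add: algebra_simps)
  then have eq: "pd j (pd i f) \<xi> = pd i (pd j f) \<eta>" using h(1) by simp
  have "dist (pd j (pd i f) \<xi>) (pd j (pd i f) x) < \<epsilon>" using d2 \<xi>(1) h by simp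
  moreover have "dist (pd i (pd j f) \<eta>) (pd i (pd j f) x) < \<epsilon>" using d1 \<eta>(1) h by simp
  ultimately have "\<bar>pd i (pd j f) x - pd j (pd i f) x\<bar> < 2 * \<epsilon>"
    using eq by (simp add: dist_real_def)
  then show False by (simp add: \<epsilon>_def)
qed


definition gmat :: "(real^'n::finite \<Rightarrow> 'n \<Rightarrow> 'n \<Rightarrow> real) \<Rightarrow> real^'n \<Rightarrow> real^'n^'n" where
  "gmat g y = (\<chi> a b. g y a b)"

lemma ginv_gmat: "ginv g y i j = matrix_inv (gmat g y) $ i $ j"
  by (simp add: ginv_def gmat_def)

locale rmet =
  fixes U :: "(real^'n::finite) set" and g :: "real^'n \<Rightarrow> 'n \<Rightarrow> 'n \<Rightarrow> real"
  assumes metric: "riemannian_metric U g"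
begin

lemma opnU: "open U" using metric unfolding riemannian_metric_def by blast
lemma g_smooth: "smooth_on U (\<lambda>y. g y i j)" using metric unfolding riemannian_metric_def by blast
lemma g_sym: "y \<in> U \<Longrightarrow> g y i j = g y j i" using metric unfolding riemannian_metric_def by blast
lemma posdef: "y \<in> U \<Longrightarrow> v \<noteq> (\<lambda>_. 0) \<Longrightarrow> (\<Sum>i\<in>UNIV. \<Sum>j\<in>UNIV. g y i j * v i * v j) > 0"
  using metric unfolding riemannian_metric_def by blast

lemma gmat_inv: assumes y: "y \<in> U"
  shows "gmat g y ** matrix_inv (gmat g y) = mat 1 \<and> matrix_inv (gmat g y) ** gmat g y = mat 1"
proof -
  have "\<forall>v. gmat g y *v v = 0 \<longrightarrow> v = 0"
  proof (intro allI impI, rule ccontr)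
    fix v assume a: "gmat g y *v v = 0" "v \<noteq> 0"
    have "(\<lambda>i. v$i) \<noteq> (\<lambda>_. 0)" using a(2) by (auto simp: vec_eq_iff fun_eq_iff)
    then have pos: "(\<Sum>i\<in>UNIV. \<Sum>j\<in>UNIV. g y i j * v$i * v$j) > 0" using posdef[OF y] by blast
    have "(\<Sum>i\<in>UNIV. \<Sum>j\<in>UNIV. g y i j * v$i * v$j) = (\<Sum>i\<in>UNIV. v$i * (gmat g y *v v)$i)"
      by (simp add: matrix_vector_mult_def gmat_def sum_distrib_left algebra_simps)
    also have "\<dots> = 0" using a(1) by simp
    finally show False using pos by simp
  qed
  then obtain B where "B ** gmat g y = mat 1" using matrix_left_invertible_ker by blast
  then have "gmat g y ** B = mat 1" using matrix_left_right_inverse by blast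
  then have "gmat g y ** B = mat 1 \<and> B ** gmat g y = mat 1" using matrix_left_right_inverse by blast
  then show ?thesis unfolding matrix_inv_def by (rule someI)
qed

lemma ginv_r: "y \<in> U \<Longrightarrow> (\<Sum>k\<in>UNIV. g y i k * ginv g y k j) = (if i = j then 1 else 0)"
  using gmat_inv[of y] unfolding ginv_gmat
  by (auto simp: vec_eq_iff matrix_matrix_mult_def mat_def gmat_def)

lemma ginv_l: "y \<in> U \<Longrightarrow> (\<Sum>k\<in>UNIV. ginv g y i k * g y k j) = (if i = j then 1 else 0)"
  using gmat_inv[of y] unfolding ginv_gmat
  by (auto simp: vec_eq_iff matrix_matrix_mult_def mat_def gmat_def)

lemma ginv_sym: assumes y: "y \<in> U" shows "ginv g y i j = ginv g y j i"
proof -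
  let ?G = "gmat g y" let ?A = "matrix_inv ?G"
  have tG: "transpose ?G = ?G" using g_sym[OF y] by (simp add: transpose_def gmat_def vec_eq_iff)
  have "transpose ?A ** ?G = mat 1"
    using gmat_inv[OF y] matrix_transpose_mul[of ?G ?A] tG by simp
  then have "transpose ?A = transpose ?A ** (?G ** ?A)" using gmat_inv[OF y] by simp
  also have "\<dots> = ?A" using \<open>transpose ?A ** ?G = mat 1\<close> by (simp add: matrix_mul_assoc)
  finally show ?thesis unfolding ginv_gmat by (metis transpose_def vec_lambda_beta)
qed

lemma det_nz: "y \<in> U \<Longrightarrow> det (gmat g y) \<noteq> 0"
  using gmat_inv invertible_def invertible_det_nz by blast

lemma ginv_cramer: assumes y: "y \<in> U"
  shows "ginv g y i j = det (\<chi> a b. if b = i then axis j 1 $ a else g y a b) / det (gmat g y)"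
proof -
  let ?G = "gmat g y" let ?x = "matrix_inv ?G *v axis j 1"
  have "?G *v ?x = axis j 1" using gmat_inv[OF y] by (simp add: matrix_vector_mul_assoc)
  then have "?x = (\<chi> k. det(\<chi> a b. if b = k then axis j 1 $ a else ?G $ a $ b) / det ?G)"
    using cramer[OF det_nz[OF y]] by blast
  then have "?x $ i = det(\<chi> a b. if b = i then axis j 1 $ a else ?G $ a $ b) / det ?G" by simp
  moreover have "?x $ i = ginv g y i j"
    by (simp add: matrix_vector_mult_def ginv_gmat axis_def if_distrib cong: if_cong)
  moreover have "(\<chi> a b. if b = i then axis j 1 $ a else ?G $ a $ b) = (\<chi> a b. if b = i then axis j 1 $ a else g y a b)"
    by (simp add: vec_eq_iff gmat_def)
  ultimately show ?thesis unfolding gmat_def by simp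
qed

lemma smooth_det: assumes "\<And>a b. smooth_on U (\<lambda>y. F y a b)"
  shows "smooth_on U (\<lambda>y. det (\<chi> a b. F y a b))"
  unfolding det_def
  by (intro smooth_sum[OF opnU] smooth_mult[OF opnU] smooth_const[OF opnU] smooth_prod[OF opnU] finite)
     (simp add: assms)

lemma ginv_smooth: "smooth_on U (\<lambda>y. ginv g y i j)"
proof -
  have n: "smooth_on U (\<lambda>y. det (\<chi> a b. if b = i then axis j 1 $ a else g y a b))"
  proof (rule smooth_det)
    fix a b show "smooth_on U (\<lambda>y. if b = i then axis j 1 $ a else g y a b)"
      by (cases "b = i") (simp_all add: smooth_const[OF opnU] g_smooth)
  qed
  have d: "smooth_on U (\<lambda>y. 1 / det (gmat g y))"
    unfolding gmat_def by (rule smooth_inverse[OF opnU smooth_det]) (use det_nz g_smooth in \<open>auto simp: gmat_def\<close>)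
  show ?thesis
    by (rule smooth_cong[OF opnU smooth_mult[OF opnU n d]]) (simp add: ginv_cramer)
qed

end


lemma sum_mul_swap: "(\<Sum>k\<in>A. a k * (\<Sum>l\<in>B. b k l * F l)) = (\<Sum>l\<in>B. (\<Sum>k\<in>A. a k * b k l) * (F l::real))"
proof -
  have "(\<Sum>k\<in>A. a k * (\<Sum>l\<in>B. b k l * F l)) = (\<Sum>k\<in>A. \<Sum>l\<in>B. a k * b k l * F l)"
    by (simp add: sum_distrib_left mult.assoc)
  also have "\<dots> = (\<Sum>l\<in>B. \<Sum>k\<in>A. a k * b k l * F l)" by (rule sum.swap)
  also have "\<dots> = (\<Sum>l\<in>B. (\<Sum>k\<in>A. a k * b k l) * F l)" by (simp add: sum_distrib_right)
  finally show ?thesis .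
qed

lemma sum_delta_l: "(\<Sum>l\<in>UNIV. (if (m::'a::finite) = l then 1 else 0) * F l) = (F m :: real)"
proof -
  have "(\<Sum>l\<in>UNIV. (if m = l then 1 else 0) * F l) = (\<Sum>l\<in>UNIV. if m = l then F l else 0)"
    by (rule sum.cong) auto
  then show ?thesis using sum.delta'[of UNIV m F] by simp
qed

context rmet begin

lemma smooth_divc: "smooth_on U f \<Longrightarrow> smooth_on U (\<lambda>y. f y / c)"
  using smooth_mult[OF opnU, of f "\<lambda>y. 1 / c"] smooth_const[OF opnU] by simp

lemmas sm_simps[simp] = smooth_divc smooth_add[OF opnU] smooth_diff[OF opnU] smooth_mult[OF opnU] smooth_minus[OF opnU]
  smooth_const[OF opnU] smooth_sum[OF opnU finite] smooth_pd[OF opnU] g_smooth ginv_smooth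

lemma pd_add': "smooth_on U f \<Longrightarrow> smooth_on U h \<Longrightarrow> x \<in> U \<Longrightarrow> pd i (\<lambda>y. f y + h y) x = pd i f x + pd i h x"
  by (rule pd_add; rule smooth_diff_at[OF opnU])
lemma pd_diff': "smooth_on U f \<Longrightarrow> smooth_on U h \<Longrightarrow> x \<in> U \<Longrightarrow> pd i (\<lambda>y. f y - h y) x = pd i f x - pd i h x"
  by (rule pd_diff; rule smooth_diff_at[OF opnU])
lemma pd_minus': "smooth_on U f \<Longrightarrow> x \<in> U \<Longrightarrow> pd i (\<lambda>y. - f y) x = - pd i f x"
  by (rule pd_minus; rule smooth_diff_at[OF opnU])
lemma pd_mult': "smooth_on U f \<Longrightarrow> smooth_on U h \<Longrightarrow> x \<in> U \<Longrightarrow> pd i (\<lambda>y. f y * h y) x = pd i f x * h x + f x * pd i h x"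
  by (rule pd_mult; rule smooth_diff_at[OF opnU])
lemma pd_sum': "(\<And>a. smooth_on U (f a)) \<Longrightarrow> x \<in> U \<Longrightarrow> pd i (\<lambda>y. \<Sum>a\<in>A. f a y) x = (\<Sum>a\<in>A. pd i (f a) x)"
  by (rule pd_sum; rule smooth_diff_at[OF opnU])
lemmas pd_rules = pd_add' pd_diff' pd_minus' pd_mult' pd_sum' pd_const

lemma contract_r: "y \<in> U \<Longrightarrow> (\<Sum>k\<in>UNIV. g y m k * (\<Sum>l\<in>UNIV. ginv g y k l * F l)) = F m"
  by (simp only: sum_mul_swap ginv_r sum_delta_l)
lemma contract_l: "y \<in> U \<Longrightarrow> (\<Sum>k\<in>UNIV. ginv g y m k * (\<Sum>l\<in>UNIV. g y k l * F l)) = F m"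
  by (simp only: sum_mul_swap ginv_l sum_delta_l)

lemma pd_g_sym: "y \<in> U \<Longrightarrow> pd k (\<lambda>z. g z i j) y = pd k (\<lambda>z. g z j i) y"
  by (rule pd_local[OF opnU]) (auto simp: g_sym)

lemma chr_sym: "y \<in> U \<Longrightarrow> christoffel g y k i j = christoffel g y k j i"
  unfolding christoffel_def using pd_g_sym[of y _ i j] by (simp add: algebra_simps)

lemma chr_smooth[simp]: "smooth_on U (\<lambda>y. christoffel g y k i j)"
  unfolding christoffel_def by simp

lemma chr_lower: "y \<in> U \<Longrightarrow> (\<Sum>k\<in>UNIV. g y m k * christoffel g y k i j)
   = (1/2) * (pd i (\<lambda>z. g z j m) y + pd j (\<lambda>z. g z i m) y - pd m (\<lambda>z. g z i j) y)"
proof -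
  assume y: "y \<in> U"
  have "(\<Sum>k\<in>UNIV. g y m k * christoffel g y k i j) = (1/2) * (\<Sum>k\<in>UNIV. g y m k * (\<Sum>l\<in>UNIV. ginv g y k l *
     (pd i (\<lambda>y. g y j l) y + pd j (\<lambda>y. g y i l) y - pd l (\<lambda>y. g y i j) y)))"
    unfolding christoffel_def by (simp add: sum_distrib_left mult_ac)
  also have "\<dots> = (1/2) * (pd i (\<lambda>z. g z j m) y + pd j (\<lambda>z. g z i m) y - pd m (\<lambda>z. g z i j) y)"
    by (simp only: contract_r[OF y])
  finally show ?thesis .
qed

lemma metric_compat: "y \<in> U \<Longrightarrow> pd k (\<lambda>z. g z i j) y
   = (\<Sum>l\<in>UNIV. g y i l * christoffel g y l k j) + (\<Sum>l\<in>UNIV. g y j l * christoffel g y l k i)"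
  using pd_g_sym[of y k i j] pd_g_sym[of y j k i] pd_g_sym[of y i k j]
  by (simp add: chr_lower algebra_simps)

lemma pd_ginv: assumes y: "y \<in> U"
  shows "pd k (\<lambda>z. ginv g z i m) y = - (\<Sum>l\<in>UNIV. christoffel g y i k l * ginv g y l m)
     - (\<Sum>l\<in>UNIV. christoffel g y m k l * ginv g y i l)"
proof -
  have E: "(\<Sum>l\<in>UNIV. pd k (\<lambda>z. ginv g z i l) y * g y l j) = - (\<Sum>l\<in>UNIV. ginv g y i l * pd k (\<lambda>z. g z l j) y)" for j
  proof -
    have "pd k (\<lambda>z. \<Sum>l\<in>UNIV. ginv g z i l * g z l j) y = pd k (\<lambda>z. if i = j then 1 else 0) y"
      by (rule pd_local[OF opnU y]) (simp add: ginv_l)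
    then show ?thesis using y by (simp add: pd_rules sum.distrib pd_const eq_neg_iff_add_eq_0)
  qed
  have "pd k (\<lambda>z. ginv g z i m) y = (\<Sum>l\<in>UNIV. pd k (\<lambda>z. ginv g z i l) y * (\<Sum>j\<in>UNIV. g y l j * ginv g y j m))"
    by (simp add: ginv_r[OF y] if_distrib cong: if_cong)
  also have "\<dots> = (\<Sum>j\<in>UNIV. (\<Sum>l\<in>UNIV. pd k (\<lambda>z. ginv g z i l) y * g y l j) * ginv g y j m)"
    by (rule sum_mul_swap)
  also have "\<dots> = (\<Sum>j\<in>UNIV. - (\<Sum>l\<in>UNIV. ginv g y i l * pd k (\<lambda>z. g z l j) y) * ginv g y j m)"
    by (simp only: E)
  also have "\<dots> = - (\<Sum>j\<in>UNIV. (\<Sum>l\<in>UNIV. ginv g y i l * (\<Sum>p\<in>UNIV. g y l p * christoffel g y p k j)) * ginv g y j m)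
                  - (\<Sum>j\<in>UNIV. (\<Sum>l\<in>UNIV. ginv g y i l * (\<Sum>p\<in>UNIV. g y j p * christoffel g y p k l)) * ginv g y j m)"
    by (simp add: metric_compat[OF y] algebra_simps sum.distrib sum_subtractf sum_negf)
  also have "(\<Sum>j\<in>UNIV. (\<Sum>l\<in>UNIV. ginv g y i l * (\<Sum>p\<in>UNIV. g y l p * christoffel g y p k j)) * ginv g y j m)
     = (\<Sum>l\<in>UNIV. christoffel g y i k l * ginv g y l m)"
    by (simp only: contract_l[OF y])
  also have "(\<Sum>j\<in>UNIV. (\<Sum>l\<in>UNIV. ginv g y i l * (\<Sum>p\<in>UNIV. g y j p * christoffel g y p k l)) * ginv g y j m)
     = (\<Sum>l\<in>UNIV. ginv g y i l * (\<Sum>j\<in>UNIV. ginv g y m j * (\<Sum>p\<in>UNIV. g y j p * christoffel g y p k l)))"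
    by (simp add: sum_distrib_left sum_distrib_right ginv_sym[OF y, of _ m] mult_ac) (rule sum.swap)
  also have "\<dots> = (\<Sum>l\<in>UNIV. ginv g y i l * christoffel g y m k l)"
    by (simp only: contract_l[OF y])
  finally show ?thesis by (simp add: mult_ac)
qed

end


definition cd2 :: "(real^'n::finite \<Rightarrow> 'n \<Rightarrow> 'n \<Rightarrow> real) \<Rightarrow> (real^'n \<Rightarrow> 'n \<Rightarrow> 'n \<Rightarrow> real) \<Rightarrow> real^'n \<Rightarrow> 'n \<Rightarrow> 'n \<Rightarrow> 'n \<Rightarrow> real" where
  "cd2 g T y c a b = pd c (\<lambda>z. T z a b) y - (\<Sum>d\<in>UNIV. christoffel g y d c a * T y d b)
     - (\<Sum>d\<in>UNIV. christoffel g y d c b * T y a d)"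

definition riem :: "(real^'n::finite \<Rightarrow> 'n \<Rightarrow> 'n \<Rightarrow> real) \<Rightarrow> real^'n \<Rightarrow> 'n \<Rightarrow> 'n \<Rightarrow> 'n \<Rightarrow> 'n \<Rightarrow> real" where
  "riem g y a b c d = pd c (\<lambda>z. christoffel g z a d b) y - pd d (\<lambda>z. christoffel g z a c b) y
     + (\<Sum>e\<in>UNIV. christoffel g y a c e * christoffel g y e d b - christoffel g y a d e * christoffel g y e c b)"

lemma riem_anti: "riem g y a b c d = - riem g y a b d c"
  unfolding riem_def by (simp add: sum_subtractf algebra_simps)

context rmet begin

lemma cd2_cov_expand:
  assumes V: "\<And>a. smooth_on U (\<lambda>y. V y a)" and x: "x \<in> U"
  shows "cd2 g (cov_d g V) x c b a = pd c (pd b (\<lambda>w. V w a)) x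
     - (\<Sum>e\<in>UNIV. pd c (\<lambda>z. christoffel g z e b a) x * V x e)
     - (\<Sum>e\<in>UNIV. christoffel g x e b a * pd c (\<lambda>z. V z e) x)
     - (\<Sum>d\<in>UNIV. christoffel g x d c b * pd d (\<lambda>w. V w a) x)
     + (\<Sum>d\<in>UNIV. christoffel g x d c b * (\<Sum>e\<in>UNIV. christoffel g x e d a * V x e))
     - (\<Sum>d\<in>UNIV. christoffel g x d c a * pd b (\<lambda>w. V w d) x)
     + (\<Sum>d\<in>UNIV. christoffel g x d c a * (\<Sum>e\<in>UNIV. christoffel g x e b d * V x e))"
  unfolding cd2_def cov_d_def using x V
  by (simp add: pd_rules sum.distrib sum_subtractf right_diff_distrib)

lemma ricci_identity:
  assumes V: "\<And>a. smooth_on U (\<lambda>y. V y a)" and x: "x \<in> U"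
  shows "cd2 g (cov_d g V) x c b a - cd2 g (cov_d g V) x b c a = - (\<Sum>d\<in>UNIV. riem g x d a c b * V x d)"
proof -
  have cl: "pd c (pd b (\<lambda>w. V w a)) x = pd b (pd c (\<lambda>w. V w a)) x" by (rule clairaut[OF opnU V x])
  have s1: "(\<Sum>d\<in>UNIV. christoffel g x d c b * pd d (\<lambda>w. V w a) x) = (\<Sum>d\<in>UNIV. christoffel g x d b c * pd d (\<lambda>w. V w a) x)"
    using chr_sym[OF x] by simp
  have s2: "(\<Sum>d\<in>UNIV. christoffel g x d c b * (\<Sum>e\<in>UNIV. christoffel g x e d a * V x e))
     = (\<Sum>d\<in>UNIV. christoffel g x d b c * (\<Sum>e\<in>UNIV. christoffel g x e d a * V x e))"
    using chr_sym[OF x] by simp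
  have w: "(\<Sum>d\<in>UNIV. christoffel g x d c a * (\<Sum>e\<in>UNIV. christoffel g x e b d * V x e))
     = (\<Sum>d\<in>UNIV. (\<Sum>e\<in>UNIV. christoffel g x d b e * christoffel g x e c a) * V x d)" for b c
  proof -
    have "(\<Sum>d\<in>UNIV. christoffel g x d c a * (\<Sum>e\<in>UNIV. christoffel g x e b d * V x e))
      = (\<Sum>d\<in>UNIV. \<Sum>e\<in>UNIV. christoffel g x d c a * christoffel g x e b d * V x e)"
      by (simp add: sum_distrib_left mult.assoc)
    also have "\<dots> = (\<Sum>e\<in>UNIV. \<Sum>d\<in>UNIV. christoffel g x d c a * christoffel g x e b d * V x e)"
      by (rule sum.swap)
    also have "\<dots> = (\<Sum>d\<in>UNIV. (\<Sum>e\<in>UNIV. christoffel g x d b e * christoffel g x e c a) * V x d)"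
      by (simp add: sum_distrib_left sum_distrib_right mult_ac)
    finally show ?thesis .
  qed
  have r: "(\<Sum>d\<in>UNIV. riem g x d a c b * V x d) = (\<Sum>d\<in>UNIV. pd c (\<lambda>z. christoffel g z d b a) x * V x d)
     - (\<Sum>d\<in>UNIV. pd b (\<lambda>z. christoffel g z d c a) x * V x d)
     + (\<Sum>d\<in>UNIV. (\<Sum>e\<in>UNIV. christoffel g x d c e * christoffel g x e b a) * V x d)
     - (\<Sum>d\<in>UNIV. (\<Sum>e\<in>UNIV. christoffel g x d b e * christoffel g x e c a) * V x d)"
    unfolding riem_def by (simp add: sum_subtractf sum.distrib algebra_simps)
  show ?thesis
    unfolding cd2_cov_expand[OF V x] r w s1 s2 cl by simp
qed


lemma ricci_riem: assumes x: "x \<in> U" shows "ricci g x f d = (\<Sum>e\<in>UNIV. riem g x e f e d)"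
proof -
  have p: "pd e (\<lambda>z. christoffel g z e d f) x = pd e (\<lambda>z. christoffel g z e f d) x" for e
    by (rule pd_local[OF opnU x]) (simp add: chr_sym)
  show ?thesis unfolding ricci_def riem_def
    using p chr_sym[OF x] by (simp add: sum.distrib sum_subtractf)
qed

definition chr1 where "chr1 y f e b = (\<Sum>a\<in>UNIV. g y f a * christoffel g y a e b)"

lemma chr1_smooth[simp]: "smooth_on U (\<lambda>y. chr1 y f e b)"
  unfolding chr1_def by simp

lemma lower_riem: assumes x: "x \<in> U"
  shows "(\<Sum>a\<in>UNIV. g x f a * riem g x a b d e) = pd d (\<lambda>z. chr1 z f e b) x - pd e (\<lambda>z. chr1 z f d b) x
     - (\<Sum>l\<in>UNIV. christoffel g x l d f * chr1 x l e b) + (\<Sum>l\<in>UNIV. christoffel g x l e f * chr1 x l d b)"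
proof -
  have P: "pd d (\<lambda>z. chr1 z f e b) x = (\<Sum>a\<in>UNIV. pd d (\<lambda>z. g z f a) x * christoffel g x a e b)
     + (\<Sum>a\<in>UNIV. g x f a * pd d (\<lambda>z. christoffel g z a e b) x)" for d e
    unfolding chr1_def using x by (simp add: pd_rules sum.distrib)
  have MC: "(\<Sum>a\<in>UNIV. pd d (\<lambda>z. g z f a) x * christoffel g x a e b)
     = (\<Sum>a\<in>UNIV. g x f a * (\<Sum>k\<in>UNIV. christoffel g x a d k * christoffel g x k e b))
       + (\<Sum>l\<in>UNIV. christoffel g x l d f * chr1 x l e b)" for d e
  proof -
    have 1: "(\<Sum>a\<in>UNIV. pd d (\<lambda>z. g z f a) x * christoffel g x a e b)
      = (\<Sum>a\<in>UNIV. (\<Sum>l\<in>UNIV. g x f l * christoffel g x l d a) * christoffel g x a e b)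
        + (\<Sum>a\<in>UNIV. (\<Sum>l\<in>UNIV. g x a l * christoffel g x l d f) * christoffel g x a e b)"
      by (simp add: metric_compat[OF x] distrib_right sum.distrib)
    have 2: "(\<Sum>a\<in>UNIV. (\<Sum>l\<in>UNIV. g x f l * christoffel g x l d a) * christoffel g x a e b)
       = (\<Sum>a\<in>UNIV. g x f a * (\<Sum>k\<in>UNIV. christoffel g x a d k * christoffel g x k e b))"
    proof -
      have "(\<Sum>a\<in>UNIV. (\<Sum>l\<in>UNIV. g x f l * christoffel g x l d a) * christoffel g x a e b)
          = (\<Sum>a\<in>UNIV. \<Sum>l\<in>UNIV. g x f l * christoffel g x l d a * christoffel g x a e b)"
        by (simp add: sum_distrib_right)
      also have "\<dots> = (\<Sum>l\<in>UNIV. \<Sum>a\<in>UNIV. g x f l * christoffel g x l d a * christoffel g x a e b)"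
        by (rule sum.swap)
      also have "\<dots> = (\<Sum>a\<in>UNIV. g x f a * (\<Sum>k\<in>UNIV. christoffel g x a d k * christoffel g x k e b))"
        by (simp add: sum_distrib_left mult.assoc)
      finally show ?thesis .
    qed
    have 3: "(\<Sum>a\<in>UNIV. (\<Sum>l\<in>UNIV. g x a l * christoffel g x l d f) * christoffel g x a e b)
       = (\<Sum>l\<in>UNIV. christoffel g x l d f * chr1 x l e b)"
    proof -
      have "(\<Sum>a\<in>UNIV. (\<Sum>l\<in>UNIV. g x a l * christoffel g x l d f) * christoffel g x a e b)
          = (\<Sum>a\<in>UNIV. \<Sum>l\<in>UNIV. g x a l * christoffel g x l d f * christoffel g x a e b)"
        by (simp add: sum_distrib_right)
      also have "\<dots> = (\<Sum>l\<in>UNIV. \<Sum>a\<in>UNIV. g x a l * christoffel g x l d f * christoffel g x a e b)"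
        by (rule sum.swap)
      also have "\<dots> = (\<Sum>l\<in>UNIV. christoffel g x l d f * chr1 x l e b)"
        unfolding chr1_def by (simp add: sum_distrib_left mult_ac g_sym[OF x])
      finally show ?thesis .
    qed
    show ?thesis using 1 2 3 by simp
  qed
  have R: "(\<Sum>a\<in>UNIV. g x f a * riem g x a b d e)
     = (\<Sum>a\<in>UNIV. g x f a * pd d (\<lambda>z. christoffel g z a e b) x) - (\<Sum>a\<in>UNIV. g x f a * pd e (\<lambda>z. christoffel g z a d b) x)
     + (\<Sum>a\<in>UNIV. g x f a * (\<Sum>k\<in>UNIV. christoffel g x a d k * christoffel g x k e b))
     - (\<Sum>a\<in>UNIV. g x f a * (\<Sum>k\<in>UNIV. christoffel g x a e k * christoffel g x k d b))"
    unfolding riem_def by (simp add: sum_subtractf sum.distrib algebra_simps)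
  show ?thesis unfolding R P MC by simp
qed

lemma lower_riem_anti: assumes x: "x \<in> U"
  shows "(\<Sum>a\<in>UNIV. g x f a * riem g x a b d e) = - (\<Sum>a\<in>UNIV. g x b a * riem g x a f d e)"
proof -
  have c1: "chr1 z f e b + chr1 z b e f = pd e (\<lambda>w. g w f b) z" if "z \<in> U" for z e
    unfolding chr1_def metric_compat[OF that] using g_sym[OF that] by (simp add: mult_ac)
  have c2: "pd d (\<lambda>z. chr1 z f e b) x + pd d (\<lambda>z. chr1 z b e f) x = pd d (pd e (\<lambda>w. g w f b)) x" for d e
  proof -
    have "pd d (\<lambda>z. chr1 z f e b) x + pd d (\<lambda>z. chr1 z b e f) x = pd d (\<lambda>z. chr1 z f e b + chr1 z b e f) x"
      using x by (simp add: pd_rules)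
    also have "\<dots> = pd d (pd e (\<lambda>w. g w f b)) x"
      by (rule pd_local[OF opnU x]) (simp add: c1)
    finally show ?thesis .
  qed
  have cl: "pd d (pd e (\<lambda>w. g w f b)) x = pd e (pd d (\<lambda>w. g w f b)) x"
    by (rule clairaut[OF opnU g_smooth x])
  have m: "(\<Sum>l\<in>UNIV. christoffel g x l d f * chr1 x l e b) = (\<Sum>l\<in>UNIV. christoffel g x l e b * chr1 x l d f)" for d e f b
  proof -
    have "(\<Sum>l\<in>UNIV. christoffel g x l d f * chr1 x l e b) = (\<Sum>l\<in>UNIV. \<Sum>a\<in>UNIV. christoffel g x l d f * g x l a * christoffel g x a e b)"
      unfolding chr1_def by (simp add: sum_distrib_left mult.assoc)
    also have "\<dots> = (\<Sum>a\<in>UNIV. \<Sum>l\<in>UNIV. christoffel g x l d f * g x l a * christoffel g x a e b)"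
      by (rule sum.swap)
    also have "\<dots> = (\<Sum>l\<in>UNIV. christoffel g x l e b * chr1 x l d f)"
      unfolding chr1_def by (simp add: sum_distrib_left mult_ac g_sym[OF x])
    finally show ?thesis .
  qed
  show ?thesis unfolding lower_riem[OF x]
    using c2[of d e] c2[of e d] cl m[of d f e b] m[of e f d b] by simp
qed

lemma riem_contract: assumes x: "x \<in> U"
  shows "(\<Sum>b\<in>UNIV. \<Sum>e\<in>UNIV. ginv g x b e * riem g x a b d e) = (\<Sum>f\<in>UNIV. ginv g x a f * ricci g x f d)"
proof -
  let ?L = "\<lambda>f b. \<Sum>p\<in>UNIV. g x f p * riem g x p b d e" 
  have 1: "riem g x a b d e = (\<Sum>f\<in>UNIV. ginv g x a f * (\<Sum>p\<in>UNIV. g x f p * riem g x p b d e))" for a b e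
    by (simp only: contract_l[OF x])
  have "(\<Sum>b\<in>UNIV. \<Sum>e\<in>UNIV. ginv g x b e * riem g x a b d e)
     = (\<Sum>b\<in>UNIV. \<Sum>e\<in>UNIV. \<Sum>f\<in>UNIV. ginv g x b e * ginv g x a f * (\<Sum>p\<in>UNIV. g x f p * riem g x p b d e))"
    by (subst 1) (simp add: sum_distrib_left mult.assoc)
  also have "\<dots> = (\<Sum>b\<in>UNIV. \<Sum>e\<in>UNIV. \<Sum>f\<in>UNIV. - (ginv g x a f * (ginv g x e b * (\<Sum>p\<in>UNIV. g x b p * riem g x p f d e))))"
  proof -
    have "ginv g x b e * ginv g x a f * (\<Sum>p\<in>UNIV. g x f p * riem g x p b d e)
       = - (ginv g x a f * (ginv g x e b * (\<Sum>p\<in>UNIV. g x b p * riem g x p f d e)))" for b e f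
      using lower_riem_anti[OF x, of f b d e] ginv_sym[OF x, of b e] by simp
    then show ?thesis by simp
  qed
  also have "\<dots> = - (\<Sum>f\<in>UNIV. ginv g x a f * (\<Sum>e\<in>UNIV. \<Sum>b\<in>UNIV. ginv g x e b * (\<Sum>p\<in>UNIV. g x b p * riem g x p f d e)))"
  proof -
    have "(\<Sum>b\<in>UNIV. \<Sum>e\<in>UNIV. \<Sum>f\<in>UNIV. - (ginv g x a f * (ginv g x e b * (\<Sum>p\<in>UNIV. g x b p * riem g x p f d e))))
      = (\<Sum>b\<in>UNIV. \<Sum>f\<in>UNIV. \<Sum>e\<in>UNIV. - (ginv g x a f * (ginv g x e b * (\<Sum>p\<in>UNIV. g x b p * riem g x p f d e))))"
      by (rule sum.cong[OF refl], rule sum.swap)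
    also have "\<dots> = (\<Sum>f\<in>UNIV. \<Sum>b\<in>UNIV. \<Sum>e\<in>UNIV. - (ginv g x a f * (ginv g x e b * (\<Sum>p\<in>UNIV. g x b p * riem g x p f d e))))"
      by (rule sum.swap)
    also have "\<dots> = (\<Sum>f\<in>UNIV. \<Sum>e\<in>UNIV. \<Sum>b\<in>UNIV. - (ginv g x a f * (ginv g x e b * (\<Sum>p\<in>UNIV. g x b p * riem g x p f d e))))"
      by (rule sum.cong[OF refl], rule sum.swap)
    finally show ?thesis by (simp add: sum_distrib_left sum_negf)
  qed
  also have "\<dots> = - (\<Sum>f\<in>UNIV. ginv g x a f * (\<Sum>e\<in>UNIV. riem g x e f d e))"
    by (simp only: contract_l[OF x])
  also have "\<dots> = (\<Sum>f\<in>UNIV. ginv g x a f * ricci g x f d)"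
  proof -
    have "riem g x e f d e = - riem g x e f e d" for e f by (rule riem_anti)
    then show ?thesis by (simp add: ricci_riem[OF x] sum_negf sum_distrib_left)
  qed
  finally show ?thesis .
qed

lemma ricci_identity_contr:
  assumes V: "\<And>a. smooth_on U (\<lambda>y. V y a)" and x: "x \<in> U"
  shows "(\<Sum>a\<in>UNIV. \<Sum>c\<in>UNIV. ginv g x a c * (cd2 g (cov_d g V) x c b a - cd2 g (cov_d g V) x b c a))
     = (\<Sum>d\<in>UNIV. V x d * (\<Sum>f\<in>UNIV. ginv g x d f * ricci g x f b))"
proof -
  have "(\<Sum>a\<in>UNIV. \<Sum>c\<in>UNIV. ginv g x a c * (cd2 g (cov_d g V) x c b a - cd2 g (cov_d g V) x b c a))
     = (\<Sum>a\<in>UNIV. \<Sum>c\<in>UNIV. \<Sum>d\<in>UNIV. V x d * (ginv g x a c * riem g x d a b c))"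
  proof -
    have "riem g x d a c b = - riem g x d a b c" for d a c by (rule riem_anti)
    then show ?thesis by (simp add: ricci_identity[OF V x] sum_distrib_left sum_negf mult_ac)
  qed
  also have "\<dots> = (\<Sum>d\<in>UNIV. V x d * (\<Sum>a\<in>UNIV. \<Sum>c\<in>UNIV. ginv g x a c * riem g x d a b c))"
  proof -
    have "(\<Sum>a\<in>UNIV. \<Sum>c\<in>UNIV. \<Sum>d\<in>UNIV. V x d * (ginv g x a c * riem g x d a b c))
       = (\<Sum>a\<in>UNIV. \<Sum>d\<in>UNIV. \<Sum>c\<in>UNIV. V x d * (ginv g x a c * riem g x d a b c))"
      by (rule sum.cong[OF refl], rule sum.swap)
    also have "\<dots> = (\<Sum>d\<in>UNIV. \<Sum>a\<in>UNIV. \<Sum>c\<in>UNIV. V x d * (ginv g x a c * riem g x d a b c))"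
      by (rule sum.swap)
    finally show ?thesis by (simp add: sum_distrib_left)
  qed
  also have "\<dots> = (\<Sum>d\<in>UNIV. V x d * (\<Sum>f\<in>UNIV. ginv g x d f * ricci g x f b))"
    by (simp add: riem_contract[OF x])
  finally show ?thesis .
qed

end


definition cdR :: "(real^'n::finite \<Rightarrow> 'n \<Rightarrow> 'n \<Rightarrow> real) \<Rightarrow> real^'n \<Rightarrow> 'n \<Rightarrow> 'n \<Rightarrow> 'n \<Rightarrow> 'n \<Rightarrow> 'n \<Rightarrow> real" where
  "cdR g y e a b c d = pd e (\<lambda>z. riem g z a b c d) y
     + (\<Sum>f\<in>UNIV. christoffel g y a e f * riem g y f b c d)
     - (\<Sum>f\<in>UNIV. christoffel g y f e b * riem g y a f c d)
     - (\<Sum>f\<in>UNIV. christoffel g y f e c * riem g y a b f d)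
     - (\<Sum>f\<in>UNIV. christoffel g y f e d * riem g y a b c f)"

definition "bE g x a b p q r = pd p (pd q (\<lambda>z. christoffel g z a r b)) x"
definition "bF g x a b p q r = (\<Sum>k\<in>UNIV. christoffel g x a q k * pd p (\<lambda>z. christoffel g z k r b) x)"
definition "bG g x a b p q r = (\<Sum>k\<in>UNIV. pd p (\<lambda>z. christoffel g z a q k) x * christoffel g x k r b)"
definition "bW g x a b p q r = (\<Sum>f\<in>UNIV. \<Sum>k\<in>UNIV. christoffel g x a p f * christoffel g x f q k * christoffel g x k r b)"
definition "bZ g x a b p q r = (\<Sum>f\<in>UNIV. christoffel g x f p q * riem g x a b f r)"

context rmet begin

lemma riem_smooth[simp]: "smooth_on U (\<lambda>y. riem g y a b c d)"
  unfolding riem_def by simp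

lemma ricci_smooth[simp]: "smooth_on U (\<lambda>y. ricci g y a b)"
  unfolding ricci_def by simp

lemma part1: assumes x: "x \<in> U"
  shows "pd e (\<lambda>z. riem g z a b c d) x = bE g x a b e c d - bE g x a b e d c + bG g x a b e c d + bF g x a b e c d
     - bG g x a b e d c - bF g x a b e d c"
  unfolding riem_def bE_def bF_def bG_def using x
  by (simp add: pd_rules sum.distrib sum_subtractf)

lemma part2: "(\<Sum>f\<in>UNIV. christoffel g x a e f * riem g x f b c d)
   = bF g x a b c e d - bF g x a b d e c + bW g x a b e c d - bW g x a b e d c"
  unfolding riem_def bF_def bW_def
  by (simp add: sum.distrib sum_subtractf algebra_simps sum_distrib_left)

lemma W_swap: "(\<Sum>f\<in>UNIV. christoffel g x f e b * (\<Sum>k\<in>UNIV. christoffel g x a c k * christoffel g x k d f)) = bW g x a b c d e"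
proof -
  have "(\<Sum>f\<in>UNIV. christoffel g x f e b * (\<Sum>k\<in>UNIV. christoffel g x a c k * christoffel g x k d f))
     = (\<Sum>f\<in>UNIV. \<Sum>k\<in>UNIV. christoffel g x f e b * christoffel g x a c k * christoffel g x k d f)"
    by (simp add: sum_distrib_left mult.assoc)
  also have "\<dots> = (\<Sum>k\<in>UNIV. \<Sum>f\<in>UNIV. christoffel g x f e b * christoffel g x a c k * christoffel g x k d f)"
    by (rule sum.swap)
  also have "\<dots> = bW g x a b c d e" unfolding bW_def by (simp add: mult_ac)
  finally show ?thesis .
qed

lemma part3: "(\<Sum>f\<in>UNIV. christoffel g x f e b * riem g x a f c d)
   = bG g x a b c d e - bG g x a b d c e + bW g x a b c d e - bW g x a b d c e"
proof -
  have "(\<Sum>f\<in>UNIV. christoffel g x f e b * riem g x a f c d)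
    = bG g x a b c d e - bG g x a b d c e
      + (\<Sum>f\<in>UNIV. christoffel g x f e b * (\<Sum>k\<in>UNIV. christoffel g x a c k * christoffel g x k d f))
      - (\<Sum>f\<in>UNIV. christoffel g x f e b * (\<Sum>k\<in>UNIV. christoffel g x a d k * christoffel g x k c f))"
    unfolding riem_def bG_def
    by (simp add: sum.distrib sum_subtractf algebra_simps sum_distrib_left)
  then show ?thesis by (simp only: W_swap)
qed

lemma part4: "(\<Sum>f\<in>UNIV. christoffel g x f e d * riem g x a b c f) = - bZ g x a b d e c" if x: "x \<in> U"
proof -
  have "riem g x a b c f = - riem g x a b f c" for f by (rule riem_anti)
  then show ?thesis unfolding bZ_def using chr_sym[OF x] by (simp add: sum_negf)
qed

lemma cdR_expand: assumes x: "x \<in> U"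
  shows "cdR g x e a b c d = bE g x a b e c d - bE g x a b e d c
     + bG g x a b e c d - bG g x a b e d c - bG g x a b c d e + bG g x a b d c e
     + bF g x a b e c d - bF g x a b e d c + bF g x a b c e d - bF g x a b d e c
     + bW g x a b e c d - bW g x a b e d c - bW g x a b c d e + bW g x a b d c e
     - bZ g x a b e c d + bZ g x a b d e c"
proof -
  have z: "(\<Sum>f\<in>UNIV. christoffel g x f e c * riem g x a b f d) = bZ g x a b e c d"
    unfolding bZ_def by simp
  show ?thesis unfolding cdR_def part1[OF x] part2 part3 part4[OF x] z by simp
qed

lemma bE_sym: "x \<in> U \<Longrightarrow> bE g x a b p q r = bE g x a b q p r"
  unfolding bE_def by (rule clairaut[OF opnU chr_smooth])

lemma bianchi2: assumes x: "x \<in> U"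
  shows "cdR g x e a b c d + cdR g x c a b d e + cdR g x d a b e c = 0"
  unfolding cdR_expand[OF x] using bE_sym[OF x, of a b e c d] bE_sym[OF x, of a b c d e] bE_sym[OF x, of a b d e c]
  by simp

end


lemma sum3_rev: "(\<Sum>b\<in>A. \<Sum>e\<in>B. \<Sum>l\<in>C. f b e l) = (\<Sum>l\<in>C. \<Sum>e\<in>B. \<Sum>b\<in>A. (f b e l::real))"
proof -
  have "(\<Sum>b\<in>A. \<Sum>e\<in>B. \<Sum>l\<in>C. f b e l) = (\<Sum>b\<in>A. \<Sum>l\<in>C. \<Sum>e\<in>B. f b e l)"
    by (rule sum.cong[OF refl], rule sum.swap)
  also have "\<dots> = (\<Sum>l\<in>C. \<Sum>b\<in>A. \<Sum>e\<in>B. f b e l)" by (rule sum.swap)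
  also have "\<dots> = (\<Sum>l\<in>C. \<Sum>e\<in>B. \<Sum>b\<in>A. f b e l)" by (rule sum.cong[OF refl], rule sum.swap)
  finally show ?thesis .
qed

lemma sum3_12: "(\<Sum>b\<in>A. \<Sum>e\<in>B. \<Sum>l\<in>C. f b e l) = (\<Sum>e\<in>B. \<Sum>b\<in>A. \<Sum>l\<in>C. (f b e l::real))"
  by (rule sum.swap)

lemma sum3_23: "(\<Sum>b\<in>A. \<Sum>e\<in>B. \<Sum>l\<in>C. f b e l) = (\<Sum>b\<in>A. \<Sum>l\<in>C. \<Sum>e\<in>B. (f b e l::real))"
  by (rule sum.cong[OF refl], rule sum.swap)

lemma sum3_rot: "(\<Sum>b\<in>A. \<Sum>e\<in>B. \<Sum>a\<in>C. f b e a) = (\<Sum>a\<in>C. \<Sum>b\<in>A. \<Sum>e\<in>B. (f b e a::real))"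
proof -
  have "(\<Sum>b\<in>A. \<Sum>e\<in>B. \<Sum>a\<in>C. f b e a) = (\<Sum>b\<in>A. \<Sum>a\<in>C. \<Sum>e\<in>B. f b e a)"
    by (rule sum.cong[OF refl], rule sum.swap)
  also have "\<dots> = (\<Sum>a\<in>C. \<Sum>b\<in>A. \<Sum>e\<in>B. f b e a)" by (rule sum.swap)
  finally show ?thesis .
qed

context rmet begin

lemma S2: assumes x: "x \<in> U"
  shows "(\<Sum>a\<in>UNIV. cdR g x e a b a d) = cd2 g (ricci g) x e b d"
proof -
  have p: "pd e (\<lambda>z. ricci g z b d) x = (\<Sum>a\<in>UNIV. pd e (\<lambda>z. riem g z a b a d) x)"
  proof -
    have "pd e (\<lambda>z. ricci g z b d) x = pd e (\<lambda>z. \<Sum>a\<in>UNIV. riem g z a b a d) x"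
      by (rule pd_local[OF opnU x]) (simp add: ricci_riem)
    also have "\<dots> = (\<Sum>a\<in>UNIV. pd e (\<lambda>z. riem g z a b a d) x)" using x by (simp add: pd_rules)
    finally show ?thesis .
  qed
  have c1: "(\<Sum>a\<in>UNIV. \<Sum>f\<in>UNIV. christoffel g x a e f * riem g x f b a d)
     = (\<Sum>a\<in>UNIV. \<Sum>f\<in>UNIV. christoffel g x f e a * riem g x a b f d)"
    by (subst sum.swap) (simp add: chr_sym[OF x])
  have c2: "(\<Sum>a\<in>UNIV. \<Sum>f\<in>UNIV. christoffel g x f e b * riem g x a f a d) = (\<Sum>f\<in>UNIV. christoffel g x f e b * ricci g x f d)"
    by (subst sum.swap) (simp add: ricci_riem[OF x] sum_distrib_left)
  have c3: "(\<Sum>a\<in>UNIV. \<Sum>f\<in>UNIV. christoffel g x f e d * riem g x a b a f) = (\<Sum>f\<in>UNIV. christoffel g x f e d * ricci g x b f)"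
    by (subst sum.swap) (simp add: ricci_riem[OF x] sum_distrib_left)
  show ?thesis unfolding cdR_def cd2_def
    by (simp only: sum.distrib sum_subtractf p c1 c2 c3)
qed

lemma S3: assumes x: "x \<in> U" shows "cdR g x d a b e a = - cdR g x d a b a e"
proof -
  have "(\<lambda>z. riem g z a b e a) = (\<lambda>z. - riem g z a b a e)" by (rule ext) (rule riem_anti)
  moreover have "riem g x f b e a = - riem g x f b a e" for f by (rule riem_anti)
  moreover have "riem g x a f e a = - riem g x a f a e" for f by (rule riem_anti)
  moreover have "riem g x a b e f = - riem g x a b f e" for f by (rule riem_anti)
  moreover have "riem g x a b f a = - riem g x a b a f" for f by (rule riem_anti)
  moreover have "pd d (\<lambda>z. - riem g z a b a e) x = - pd d (\<lambda>z. riem g z a b a e) x"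
    using x by (simp add: pd_minus')
  ultimately show ?thesis unfolding cdR_def by (simp add: sum_negf)
qed


definition Qf where "Qf z a d = (\<Sum>b\<in>UNIV. \<Sum>e\<in>UNIV. ginv g z b e * riem g z a b d e)"

lemma Qf_ricci: "z \<in> U \<Longrightarrow> Qf z a d = (\<Sum>f\<in>UNIV. ginv g z a f * ricci g z f d)"
  unfolding Qf_def by (rule riem_contract)

lemma S6: assumes x: "x \<in> U"
  shows "(\<Sum>b\<in>UNIV. \<Sum>e\<in>UNIV. ginv g x b e * (\<Sum>a\<in>UNIV. cdR g x a a b d e))
     = (\<Sum>a\<in>UNIV. \<Sum>f\<in>UNIV. ginv g x a f * cd2 g (ricci g) x a f d)"
proof -
  define T1 where "T1 = (\<Sum>a\<in>UNIV. \<Sum>b\<in>UNIV. \<Sum>e\<in>UNIV. ginv g x b e * pd a (\<lambda>z. riem g z a b d e) x)"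
  define T2 where "T2 = (\<Sum>a\<in>UNIV. \<Sum>b\<in>UNIV. \<Sum>e\<in>UNIV. ginv g x b e * (\<Sum>f\<in>UNIV. christoffel g x a a f * riem g x f b d e))"
  define T3 where "T3 = (\<Sum>a\<in>UNIV. \<Sum>b\<in>UNIV. \<Sum>e\<in>UNIV. ginv g x b e * (\<Sum>f\<in>UNIV. christoffel g x f a b * riem g x a f d e))"
  define T4 where "T4 = (\<Sum>a\<in>UNIV. \<Sum>b\<in>UNIV. \<Sum>e\<in>UNIV. ginv g x b e * (\<Sum>f\<in>UNIV. christoffel g x f a d * riem g x a b f e))"
  define T5 where "T5 = (\<Sum>a\<in>UNIV. \<Sum>b\<in>UNIV. \<Sum>e\<in>UNIV. ginv g x b e * (\<Sum>f\<in>UNIV. christoffel g x f a e * riem g x a b d f))"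
  define B1 where "B1 = (\<Sum>a\<in>UNIV. \<Sum>b\<in>UNIV. \<Sum>e\<in>UNIV. (\<Sum>l\<in>UNIV. christoffel g x b a l * ginv g x l e) * riem g x a b d e)"
  define B2 where "B2 = (\<Sum>a\<in>UNIV. \<Sum>b\<in>UNIV. \<Sum>e\<in>UNIV. (\<Sum>l\<in>UNIV. christoffel g x e a l * ginv g x b l) * riem g x a b d e)"
  define P where "P = (\<Sum>a\<in>UNIV. \<Sum>f\<in>UNIV. ginv g x a f * pd a (\<lambda>z. ricci g z f d) x)"
  define C2 where "C2 = (\<Sum>a\<in>UNIV. \<Sum>f\<in>UNIV. (\<Sum>l\<in>UNIV. christoffel g x f a l * ginv g x a l) * ricci g x f d)"
  define D1 where "D1 = (\<Sum>a\<in>UNIV. \<Sum>f\<in>UNIV. ginv g x a f * (\<Sum>k\<in>UNIV. christoffel g x k a f * ricci g x k d))"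
  define D2 where "D2 = (\<Sum>a\<in>UNIV. \<Sum>f\<in>UNIV. ginv g x a f * (\<Sum>k\<in>UNIV. christoffel g x k a d * ricci g x f k))"
  have LHS: "(\<Sum>b\<in>UNIV. \<Sum>e\<in>UNIV. ginv g x b e * (\<Sum>a\<in>UNIV. cdR g x a a b d e)) = T1 + T2 - T3 - T4 - T5"
  proof -
    have "(\<Sum>b\<in>UNIV. \<Sum>e\<in>UNIV. ginv g x b e * (\<Sum>a\<in>UNIV. cdR g x a a b d e))
       = (\<Sum>a\<in>UNIV. \<Sum>b\<in>UNIV. \<Sum>e\<in>UNIV. ginv g x b e * cdR g x a a b d e)"
      unfolding sum_distrib_left by (rule sum3_rot)
    then show ?thesis unfolding T1_def T2_def T3_def T4_def T5_def cdR_def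
      by (simp add: algebra_simps sum.distrib sum_subtractf)
  qed
  have dginv: "pd a (\<lambda>z. ginv g z b e) x = - (\<Sum>l\<in>UNIV. christoffel g x b a l * ginv g x l e) - (\<Sum>l\<in>UNIV. christoffel g x e a l * ginv g x b l)" for a b e
    using pd_ginv[OF x, of a b e] ginv_sym[OF x] by (simp add: mult_ac)
  have Qa: "(\<Sum>a\<in>UNIV. pd a (\<lambda>z. Qf z a d) x) = T1 - B1 - B2"
    unfolding Qf_def T1_def B1_def B2_def using x
    by (simp add: pd_rules dginv sum.distrib sum_subtractf algebra_simps)
  have Qb: "(\<Sum>a\<in>UNIV. pd a (\<lambda>z. Qf z a d) x) = P - T2' - C2" if T2'_def: "T2' = (\<Sum>a\<in>UNIV. \<Sum>f\<in>UNIV. (\<Sum>l\<in>UNIV. christoffel g x a a l * ginv g x l f) * ricci g x f d)" for T2'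
  proof -
    have 1: "(\<Sum>a\<in>UNIV. pd a (\<lambda>z. Qf z a d) x) = (\<Sum>a\<in>UNIV. pd a (\<lambda>z. \<Sum>f\<in>UNIV. ginv g z a f * ricci g z f d) x)"
      by (rule sum.cong[OF refl], rule pd_local[OF opnU x]) (simp add: Qf_ricci)
    show ?thesis unfolding 1 P_def T2'_def C2_def using x
      by (simp add: pd_rules dginv sum.distrib sum_subtractf algebra_simps)
  qed
  have e1: "T3 = B1"
  proof -
    have "T3 = (\<Sum>a\<in>UNIV. \<Sum>b\<in>UNIV. \<Sum>e\<in>UNIV. \<Sum>f\<in>UNIV. ginv g x b e * christoffel g x f a b * riem g x a f d e)"
      unfolding T3_def by (simp add: sum_distrib_left mult.assoc)
    also have "\<dots> = (\<Sum>a\<in>UNIV. \<Sum>f\<in>UNIV. \<Sum>e\<in>UNIV. \<Sum>b\<in>UNIV. ginv g x b e * christoffel g x f a b * riem g x a f d e)"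
      by (rule sum.cong[OF refl], rule sum3_rev)
    also have "\<dots> = B1" unfolding B1_def by (simp add: sum_distrib_right sum_distrib_left mult_ac)
    finally show ?thesis .
  qed
  have e2: "T5 = B2"
  proof -
    have "T5 = (\<Sum>a\<in>UNIV. \<Sum>b\<in>UNIV. \<Sum>e\<in>UNIV. \<Sum>f\<in>UNIV. ginv g x b e * christoffel g x f a e * riem g x a b d f)"
      unfolding T5_def by (simp add: sum_distrib_left mult.assoc)
    also have "\<dots> = (\<Sum>a\<in>UNIV. \<Sum>b\<in>UNIV. \<Sum>f\<in>UNIV. \<Sum>e\<in>UNIV. ginv g x b e * christoffel g x f a e * riem g x a b d f)"
      by (rule sum.cong[OF refl], rule sum.cong[OF refl], rule sum.swap)
    also have "\<dots> = B2" unfolding B2_def by (simp add: sum_distrib_right sum_distrib_left mult_ac)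
    finally show ?thesis .
  qed
  have e3: "T2 = (\<Sum>a\<in>UNIV. \<Sum>f\<in>UNIV. christoffel g x a a f * Qf x f d)"
  proof -
    have "T2 = (\<Sum>a\<in>UNIV. \<Sum>b\<in>UNIV. \<Sum>e\<in>UNIV. \<Sum>f\<in>UNIV. christoffel g x a a f * (ginv g x b e * riem g x f b d e))"
      unfolding T2_def by (simp add: sum_distrib_left mult_ac)
    also have "\<dots> = (\<Sum>a\<in>UNIV. \<Sum>f\<in>UNIV. \<Sum>b\<in>UNIV. \<Sum>e\<in>UNIV. christoffel g x a a f * (ginv g x b e * riem g x f b d e))"
      by (rule sum.cong[OF refl], rule sum3_rot)
    also have "\<dots> = (\<Sum>a\<in>UNIV. \<Sum>f\<in>UNIV. christoffel g x a a f * Qf x f d)"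
      unfolding Qf_def by (simp add: sum_distrib_left)
    finally show ?thesis .
  qed
  have e4: "T4 = (\<Sum>a\<in>UNIV. \<Sum>f\<in>UNIV. christoffel g x f a d * Qf x a f)"
  proof -
    have "T4 = (\<Sum>a\<in>UNIV. \<Sum>b\<in>UNIV. \<Sum>e\<in>UNIV. \<Sum>f\<in>UNIV. christoffel g x f a d * (ginv g x b e * riem g x a b f e))"
      unfolding T4_def by (simp add: sum_distrib_left mult_ac)
    also have "\<dots> = (\<Sum>a\<in>UNIV. \<Sum>f\<in>UNIV. \<Sum>b\<in>UNIV. \<Sum>e\<in>UNIV. christoffel g x f a d * (ginv g x b e * riem g x a b f e))"
      by (rule sum.cong[OF refl], rule sum3_rot)
    also have "\<dots> = (\<Sum>a\<in>UNIV. \<Sum>f\<in>UNIV. christoffel g x f a d * Qf x a f)"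
      unfolding Qf_def by (simp add: sum_distrib_left)
    finally show ?thesis .
  qed
  define T2' where "T2' = (\<Sum>a\<in>UNIV. \<Sum>f\<in>UNIV. (\<Sum>l\<in>UNIV. christoffel g x a a l * ginv g x l f) * ricci g x f d)"
  have e5: "T2' = T2"
  proof -
    have "T2' = (\<Sum>a\<in>UNIV. \<Sum>l\<in>UNIV. christoffel g x a a l * (\<Sum>f\<in>UNIV. ginv g x l f * ricci g x f d))"
      unfolding T2'_def by (simp add: sum_mul_swap)
    then show ?thesis using e3 by (simp add: Qf_ricci[OF x])
  qed
  have e6: "C2 = D1"
  proof -
    have "C2 = (\<Sum>a\<in>UNIV. \<Sum>f\<in>UNIV. \<Sum>l\<in>UNIV. ginv g x a l * christoffel g x f a l * ricci g x f d)"
      unfolding C2_def by (simp add: sum_distrib_right sum_distrib_left mult_ac)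
    also have "\<dots> = (\<Sum>a\<in>UNIV. \<Sum>l\<in>UNIV. \<Sum>f\<in>UNIV. ginv g x a l * christoffel g x f a l * ricci g x f d)"
      by (rule sum.cong[OF refl], rule sum.swap)
    also have "\<dots> = D1" unfolding D1_def by (simp add: sum_distrib_left mult_ac)
    finally show ?thesis .
  qed
  have e7: "D2 = T4"
  proof -
    have "D2 = (\<Sum>a\<in>UNIV. \<Sum>k\<in>UNIV. christoffel g x k a d * (\<Sum>f\<in>UNIV. ginv g x a f * ricci g x f k))"
      unfolding D2_def by (simp add: sum_mul_swap mult_ac)
    then show ?thesis using e4 by (simp add: Qf_ricci[OF x])
  qed
  have RHS: "(\<Sum>a\<in>UNIV. \<Sum>f\<in>UNIV. ginv g x a f * cd2 g (ricci g) x a f d) = P - D1 - D2"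
    unfolding P_def D1_def D2_def cd2_def by (simp add: algebra_simps sum.distrib sum_subtractf)
  show ?thesis unfolding LHS RHS using Qa Qb[OF T2'_def] e1 e2 e5 e6 e7 by linarith
qed

lemma contracted_bianchi: assumes x: "x \<in> U"
  shows "2 * (\<Sum>a\<in>UNIV. \<Sum>c\<in>UNIV. ginv g x a c * cd2 g (ricci g) x c a d)
     = (\<Sum>b\<in>UNIV. \<Sum>e\<in>UNIV. ginv g x b e * cd2 g (ricci g) x d b e)"
proof -
  have "(\<Sum>a\<in>UNIV. cdR g x e a b a d) + (\<Sum>a\<in>UNIV. cdR g x a a b d e) + (\<Sum>a\<in>UNIV. cdR g x d a b e a) = 0" for b e
  proof -
    have "(\<Sum>a\<in>UNIV. cdR g x e a b a d + cdR g x a a b d e + cdR g x d a b e a) = 0"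
      by (simp only: bianchi2[OF x] sum.neutral_const)
    then show ?thesis by (simp only: sum.distrib)
  qed
  then have "cd2 g (ricci g) x e b d + (\<Sum>a\<in>UNIV. cdR g x a a b d e) - cd2 g (ricci g) x d b e = 0" for b e
    by (simp add: S2[OF x] S3[OF x] sum_negf)
  then have "(\<Sum>b\<in>UNIV. \<Sum>e\<in>UNIV. ginv g x b e * (cd2 g (ricci g) x e b d + (\<Sum>a\<in>UNIV. cdR g x a a b d e) - cd2 g (ricci g) x d b e)) = 0"
    by simp
  then have "(\<Sum>b\<in>UNIV. \<Sum>e\<in>UNIV. ginv g x b e * cd2 g (ricci g) x e b d)
     + (\<Sum>b\<in>UNIV. \<Sum>e\<in>UNIV. ginv g x b e * (\<Sum>a\<in>UNIV. cdR g x a a b d e))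
     - (\<Sum>b\<in>UNIV. \<Sum>e\<in>UNIV. ginv g x b e * cd2 g (ricci g) x d b e) = 0"
    by (simp add: algebra_simps sum.distrib sum_subtractf)
  then have "(\<Sum>b\<in>UNIV. \<Sum>e\<in>UNIV. ginv g x b e * cd2 g (ricci g) x e b d)
     + (\<Sum>a\<in>UNIV. \<Sum>f\<in>UNIV. ginv g x a f * cd2 g (ricci g) x a f d)
     - (\<Sum>b\<in>UNIV. \<Sum>e\<in>UNIV. ginv g x b e * cd2 g (ricci g) x d b e) = 0"
    by (simp only: S6[OF x])
  moreover have "(\<Sum>b\<in>UNIV. \<Sum>e\<in>UNIV. ginv g x b e * cd2 g (ricci g) x e b d) = (\<Sum>a\<in>UNIV. \<Sum>c\<in>UNIV. ginv g x a c * cd2 g (ricci g) x c a d)"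
    by simp
  moreover have "(\<Sum>a\<in>UNIV. \<Sum>f\<in>UNIV. ginv g x a f * cd2 g (ricci g) x a f d) = (\<Sum>a\<in>UNIV. \<Sum>c\<in>UNIV. ginv g x a c * cd2 g (ricci g) x c a d)"
    by (subst sum.swap) (simp add: ginv_sym[OF x])
  ultimately show ?thesis by linarith
qed

end


context rmet begin

lemma cov_smooth[simp]: "(\<And>a. smooth_on U (\<lambda>y. W y a)) \<Longrightarrow> smooth_on U (\<lambda>y. cov_d g W y i j)"
  unfolding cov_d_def by simp

lemma cd2_smooth[simp]: "(\<And>a b. smooth_on U (\<lambda>y. T y a b)) \<Longrightarrow> smooth_on U (\<lambda>y. cd2 g T y c i j)"
  unfolding cd2_def by simp

lemma raise_smooth[simp]: "(\<And>a. smooth_on U (\<lambda>y. W y a)) \<Longrightarrow> smooth_on U (\<lambda>y. raise g W y b)"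
  unfolding raise_def by simp

lemma divg_smooth[simp]: "(\<And>a. smooth_on U (\<lambda>y. W y a)) \<Longrightarrow> smooth_on U (\<lambda>y. divg g W y)"
  unfolding divg_def by simp

lemma symcov_smooth[simp]: "(\<And>a. smooth_on U (\<lambda>y. W y a)) \<Longrightarrow> smooth_on U (\<lambda>y. sym_cov_d g W y i j)"
  unfolding sym_cov_d_def by simp

lemma grad_smooth[simp]: "smooth_on U f \<Longrightarrow> smooth_on U (\<lambda>y. grad f y a)"
  unfolding grad_def by simp

lemma lap_smooth[simp]: "smooth_on U f \<Longrightarrow> smooth_on U (\<lambda>y. laplacian g f y)"
  unfolding laplacian_def by simp

lemma cov_cong: assumes x: "x \<in> U" and "\<And>y a. y \<in> U \<Longrightarrow> W1 y a = W2 y a"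
  shows "cov_d g W1 x i j = cov_d g W2 x i j"
proof -
  have "pd i (\<lambda>y. W1 y j) x = pd i (\<lambda>y. W2 y j) x" by (rule pd_local[OF opnU x]) (simp add: assms)
  then show ?thesis unfolding cov_d_def using assms by simp
qed

lemma cd2_cong: assumes x: "x \<in> U" and "\<And>y a b. y \<in> U \<Longrightarrow> T1 y a b = T2 y a b"
  shows "cd2 g T1 x c i j = cd2 g T2 x c i j"
proof -
  have "pd c (\<lambda>y. T1 y i j) x = pd c (\<lambda>y. T2 y i j) x" by (rule pd_local[OF opnU x]) (simp add: assms)
  then show ?thesis unfolding cd2_def using assms by simp
qed

lemma cov_sub: assumes "\<And>a. smooth_on U (\<lambda>y. W1 y a)" "\<And>a. smooth_on U (\<lambda>y. W2 y a)" "x \<in> U"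
  shows "cov_d g (\<lambda>y a. W1 y a - W2 y a) x i j = cov_d g W1 x i j - cov_d g W2 x i j"
  unfolding cov_d_def using assms by (simp add: pd_rules sum_subtractf algebra_simps)

lemma cov_fmul: assumes "smooth_on U f" "\<And>a. smooth_on U (\<lambda>y. W y a)" "x \<in> U"
  shows "cov_d g (\<lambda>y a. f y * W y a) x i j = pd i f x * W x j + f x * cov_d g W x i j"
  unfolding cov_d_def using assms by (simp add: pd_rules sum_distrib_left algebra_simps)

lemma cov_add: assumes "\<And>a. smooth_on U (\<lambda>y. W1 y a)" "\<And>a. smooth_on U (\<lambda>y. W2 y a)" "x \<in> U"
  shows "cov_d g (\<lambda>y a. W1 y a + W2 y a) x i j = cov_d g W1 x i j + cov_d g W2 x i j"
  unfolding cov_d_def using assms by (simp add: pd_rules sum.distrib algebra_simps)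

lemma cd2_add: assumes "\<And>a b. smooth_on U (\<lambda>y. T1 y a b)" "\<And>a b. smooth_on U (\<lambda>y. T2 y a b)" "x \<in> U"
  shows "cd2 g (\<lambda>y a b. T1 y a b + T2 y a b) x c i j = cd2 g T1 x c i j + cd2 g T2 x c i j"
  unfolding cd2_def using assms by (simp add: pd_rules sum.distrib algebra_simps)

lemma cd2_sub: assumes "\<And>a b. smooth_on U (\<lambda>y. T1 y a b)" "\<And>a b. smooth_on U (\<lambda>y. T2 y a b)" "x \<in> U"
  shows "cd2 g (\<lambda>y a b. T1 y a b - T2 y a b) x c i j = cd2 g T1 x c i j - cd2 g T2 x c i j"
  unfolding cd2_def using assms by (simp add: pd_rules sum_subtractf algebra_simps)

lemma cd2_fmul: assumes "smooth_on U f" "\<And>a b. smooth_on U (\<lambda>y. T y a b)" "x \<in> U"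
  shows "cd2 g (\<lambda>y a b. f y * T y a b) x c i j = pd c f x * T x i j + f x * cd2 g T x c i j"
  unfolding cd2_def using assms by (simp add: pd_rules sum_distrib_left algebra_simps)

lemma cd2_prod: assumes "\<And>a. smooth_on U (\<lambda>y. u y a)" "\<And>a. smooth_on U (\<lambda>y. w y a)" "x \<in> U"
  shows "cd2 g (\<lambda>y a b. u y a * w y b) x c i j = cov_d g u x c i * w x j + u x i * cov_d g w x c j"
  unfolding cd2_def cov_d_def using assms by (simp add: pd_rules sum_distrib_left sum_distrib_right algebra_simps)

lemma cd2_transp: "cd2 g (\<lambda>y a b. T y b a) x c i j = cd2 g T x c j i"
  unfolding cd2_def by (simp add: algebra_simps)

lemma cd2_g: assumes x: "x \<in> U" shows "cd2 g g x c i j = 0"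
  unfolding cd2_def metric_compat[OF x] using g_sym[OF x] by (simp add: mult_ac)


lemma cd2_sym: assumes W: "\<And>a. smooth_on U (\<lambda>y. W y a)" and x: "x \<in> U"
  shows "cd2 g (sym_cov_d g W) x c i j = (cd2 g (cov_d g W) x c i j + cd2 g (cov_d g W) x c j i) / 2"
proof -
  have e: "sym_cov_d g W = (\<lambda>y a b. (1/2) * (cov_d g W y a b + cov_d g W y b a))"
    by (intro ext) (simp add: sym_cov_d_def)
  have "cd2 g (sym_cov_d g W) x c i j = cd2 g (\<lambda>y a b. (1/2) * (cov_d g W y a b + cov_d g W y b a)) x c i j"
    by (simp only: e)
  also have "\<dots> = (1/2) * cd2 g (\<lambda>y a b. cov_d g W y a b + cov_d g W y b a) x c i j"
    using cd2_fmul[of "\<lambda>y. 1/2" "\<lambda>y a b. cov_d g W y a b + cov_d g W y b a" x c i j] W x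
    by (simp only: pd_const mult_zero_left add_0_left smooth_const[OF opnU] sm_simps cov_smooth)
  also have "\<dots> = (1/2) * (cd2 g (cov_d g W) x c i j + cd2 g (\<lambda>y a b. cov_d g W y b a) x c i j)"
    using cd2_add[of "cov_d g W" "\<lambda>y a b. cov_d g W y b a" x c i j] W x by (simp only: cov_smooth)
  finally show ?thesis using cd2_transp[of "cov_d g W" x c i j] by simp
qed

lemma pd_raise: assumes W: "\<And>a. smooth_on U (\<lambda>y. W y a)" and x: "x \<in> U"
  shows "pd i (\<lambda>y. raise g W y b) x = (\<Sum>e\<in>UNIV. ginv g x b e * cov_d g W x i e)
     - (\<Sum>l\<in>UNIV. christoffel g x b i l * raise g W x l)"
proof -
  have 1: "pd i (\<lambda>y. raise g W y b) x = (\<Sum>e\<in>UNIV. ginv g x b e * pd i (\<lambda>y. W y e) x)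
     - (\<Sum>e\<in>UNIV. (\<Sum>l\<in>UNIV. christoffel g x b i l * ginv g x l e) * W x e)
     - (\<Sum>e\<in>UNIV. (\<Sum>l\<in>UNIV. christoffel g x e i l * ginv g x b l) * W x e)"
    unfolding raise_def using W x by (simp add: pd_rules pd_ginv sum.distrib sum_subtractf algebra_simps)
  have 2: "(\<Sum>e\<in>UNIV. (\<Sum>l\<in>UNIV. christoffel g x b i l * ginv g x l e) * W x e)
     = (\<Sum>l\<in>UNIV. christoffel g x b i l * raise g W x l)"
    unfolding raise_def by (simp add: sum_mul_swap[symmetric])
  have 3: "(\<Sum>e\<in>UNIV. (\<Sum>l\<in>UNIV. christoffel g x e i l * ginv g x b l) * W x e)
     = (\<Sum>l\<in>UNIV. ginv g x b l * (\<Sum>e\<in>UNIV. christoffel g x e i l * W x e))"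
  proof -
    have "(\<Sum>e\<in>UNIV. (\<Sum>l\<in>UNIV. christoffel g x e i l * ginv g x b l) * W x e)
      = (\<Sum>e\<in>UNIV. \<Sum>l\<in>UNIV. christoffel g x e i l * ginv g x b l * W x e)" by (simp add: sum_distrib_right)
    also have "\<dots> = (\<Sum>l\<in>UNIV. \<Sum>e\<in>UNIV. christoffel g x e i l * ginv g x b l * W x e)" by (rule sum.swap)
    also have "\<dots> = (\<Sum>l\<in>UNIV. ginv g x b l * (\<Sum>e\<in>UNIV. christoffel g x e i l * W x e))"
      by (simp add: sum_distrib_left mult_ac)
    finally show ?thesis .
  qed
  show ?thesis unfolding 1 2 3 cov_d_def by (simp add: right_diff_distrib sum_subtractf)
qed

lemma cov_contr: assumes W: "\<And>a. smooth_on U (\<lambda>y. W y a)" and S: "\<And>a b. smooth_on U (\<lambda>y. S y a b)" and x: "x \<in> U"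
  shows "cov_d g (\<lambda>y a. \<Sum>b\<in>UNIV. raise g W y b * S y a b) x i a
    = (\<Sum>b\<in>UNIV. (\<Sum>e\<in>UNIV. ginv g x b e * cov_d g W x i e) * S x a b) + (\<Sum>b\<in>UNIV. raise g W x b * cd2 g S x i a b)"
proof -
  have 1: "cov_d g (\<lambda>y a. \<Sum>b\<in>UNIV. raise g W y b * S y a b) x i a
    = (\<Sum>b\<in>UNIV. (\<Sum>e\<in>UNIV. ginv g x b e * cov_d g W x i e) * S x a b)
      - (\<Sum>b\<in>UNIV. (\<Sum>l\<in>UNIV. christoffel g x b i l * raise g W x l) * S x a b)
      + (\<Sum>b\<in>UNIV. raise g W x b * pd i (\<lambda>y. S y a b) x)
      - (\<Sum>k\<in>UNIV. christoffel g x k i a * (\<Sum>b\<in>UNIV. raise g W x b * S x k b))"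
    unfolding cov_d_def[of g "\<lambda>y a. \<Sum>b\<in>UNIV. raise g W y b * S y a b"] using W S x
    by (simp add: pd_rules pd_raise sum.distrib sum_subtractf algebra_simps)
  have 2: "(\<Sum>b\<in>UNIV. (\<Sum>l\<in>UNIV. christoffel g x b i l * raise g W x l) * S x a b)
     = (\<Sum>b\<in>UNIV. raise g W x b * (\<Sum>d\<in>UNIV. christoffel g x d i b * S x a d))"
  proof -
    have "(\<Sum>b\<in>UNIV. (\<Sum>l\<in>UNIV. christoffel g x b i l * raise g W x l) * S x a b)
      = (\<Sum>b\<in>UNIV. \<Sum>l\<in>UNIV. christoffel g x b i l * raise g W x l * S x a b)" by (simp add: sum_distrib_right)
    also have "\<dots> = (\<Sum>l\<in>UNIV. \<Sum>b\<in>UNIV. christoffel g x b i l * raise g W x l * S x a b)" by (rule sum.swap)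
    also have "\<dots> = (\<Sum>b\<in>UNIV. raise g W x b * (\<Sum>d\<in>UNIV. christoffel g x d i b * S x a d))"
      by (simp add: sum_distrib_left mult_ac)
    finally show ?thesis .
  qed
  have 3: "(\<Sum>k\<in>UNIV. christoffel g x k i a * (\<Sum>b\<in>UNIV. raise g W x b * S x k b))
     = (\<Sum>b\<in>UNIV. raise g W x b * (\<Sum>d\<in>UNIV. christoffel g x d i a * S x d b))"
    by (simp add: sum_distrib_left mult_ac) (rule sum.swap)
  show ?thesis unfolding 1 2 3 cd2_def by (simp add: right_diff_distrib sum_subtractf sum.distrib)
qed

lemma trace_d: assumes T: "\<And>a b. smooth_on U (\<lambda>y. T y a b)" and x: "x \<in> U"
  shows "pd b (\<lambda>y. \<Sum>a\<in>UNIV. \<Sum>c\<in>UNIV. ginv g y a c * T y a c) x = (\<Sum>a\<in>UNIV. \<Sum>c\<in>UNIV. ginv g x a c * cd2 g T x b a c)"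
proof -
  have 1: "pd b (\<lambda>y. \<Sum>a\<in>UNIV. \<Sum>c\<in>UNIV. ginv g y a c * T y a c) x =
      (\<Sum>a\<in>UNIV. \<Sum>c\<in>UNIV. ginv g x a c * pd b (\<lambda>y. T y a c) x)
    - (\<Sum>a\<in>UNIV. \<Sum>c\<in>UNIV. (\<Sum>l\<in>UNIV. christoffel g x a b l * ginv g x l c) * T x a c)
    - (\<Sum>a\<in>UNIV. \<Sum>c\<in>UNIV. (\<Sum>l\<in>UNIV. christoffel g x c b l * ginv g x a l) * T x a c)"
    using T x by (simp add: pd_rules pd_ginv sum.distrib sum_subtractf algebra_simps)
  have 2: "(\<Sum>a\<in>UNIV. \<Sum>c\<in>UNIV. (\<Sum>l\<in>UNIV. christoffel g x a b l * ginv g x l c) * T x a c)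
    = (\<Sum>a\<in>UNIV. \<Sum>c\<in>UNIV. ginv g x a c * (\<Sum>d\<in>UNIV. christoffel g x d b a * T x d c))"
  proof -
    have "(\<Sum>a\<in>UNIV. \<Sum>c\<in>UNIV. (\<Sum>l\<in>UNIV. christoffel g x a b l * ginv g x l c) * T x a c)
      = (\<Sum>a\<in>UNIV. \<Sum>c\<in>UNIV. \<Sum>l\<in>UNIV. christoffel g x a b l * ginv g x l c * T x a c)"
      by (simp add: sum_distrib_right)
    also have "\<dots> = (\<Sum>l\<in>UNIV. \<Sum>c\<in>UNIV. \<Sum>a\<in>UNIV. christoffel g x a b l * ginv g x l c * T x a c)"
      by (rule sum3_rev)
    also have "\<dots> = (\<Sum>a\<in>UNIV. \<Sum>c\<in>UNIV. ginv g x a c * (\<Sum>d\<in>UNIV. christoffel g x d b a * T x d c))"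
      using chr_sym[OF x] by (simp add: sum_distrib_left mult_ac)
    finally show ?thesis .
  qed
  have 3: "(\<Sum>a\<in>UNIV. \<Sum>c\<in>UNIV. (\<Sum>l\<in>UNIV. christoffel g x c b l * ginv g x a l) * T x a c)
    = (\<Sum>a\<in>UNIV. \<Sum>c\<in>UNIV. ginv g x a c * (\<Sum>d\<in>UNIV. christoffel g x d b c * T x a d))"
  proof -
    have "(\<Sum>a\<in>UNIV. \<Sum>c\<in>UNIV. (\<Sum>l\<in>UNIV. christoffel g x c b l * ginv g x a l) * T x a c)
      = (\<Sum>a\<in>UNIV. \<Sum>c\<in>UNIV. \<Sum>l\<in>UNIV. christoffel g x c b l * ginv g x a l * T x a c)"
      by (simp add: sum_distrib_right)
    also have "\<dots> = (\<Sum>a\<in>UNIV. \<Sum>l\<in>UNIV. \<Sum>c\<in>UNIV. christoffel g x c b l * ginv g x a l * T x a c)"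
      by (rule sum3_23)
    also have "\<dots> = (\<Sum>a\<in>UNIV. \<Sum>c\<in>UNIV. ginv g x a c * (\<Sum>d\<in>UNIV. christoffel g x d b c * T x a d))"
      using chr_sym[OF x] by (simp add: sum_distrib_left mult_ac)
    finally show ?thesis .
  qed
  show ?thesis unfolding 1 2 3 cd2_def by (simp add: right_diff_distrib sum_subtractf)
qed

end


lemma sum2_split4: "(\<Sum>i\<in>UNIV. \<Sum>j\<in>UNIV. (gi i j::real) * (a i j + b i j - (c i j + d i j)))
  = (\<Sum>i\<in>UNIV. \<Sum>j\<in>UNIV. gi i j * a i j) + (\<Sum>i\<in>UNIV. \<Sum>j\<in>UNIV. gi i j * b i j)
    - (\<Sum>i\<in>UNIV. \<Sum>j\<in>UNIV. gi i j * c i j) - (\<Sum>i\<in>UNIV. \<Sum>j\<in>UNIV. gi i j * d i j)"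
  by (simp add: distrib_left right_diff_distrib sum.distrib sum_subtractf)

lemma sum2_half: "(\<Sum>c\<in>A. \<Sum>e\<in>B. (f c e + h c e) / 2 - (p c e + q c e) / 2)
  = ((\<Sum>c\<in>A. \<Sum>e\<in>B. f c e) + (\<Sum>c\<in>A. \<Sum>e\<in>B. h c e)) / 2
    - ((\<Sum>c\<in>A. \<Sum>e\<in>B. p c e) + (\<Sum>c\<in>A. \<Sum>e\<in>B. (q c e::real))) / 2"
proof -
  have "(\<Sum>c\<in>A. \<Sum>e\<in>B. (f c e + h c e) / 2 - (p c e + q c e) / 2)
     = (\<Sum>c\<in>A. \<Sum>e\<in>B. (f c e + h c e - p c e - q c e) / 2)" by (intro sum.cong refl) (simp add: field_simps)
  also have "\<dots> = (\<Sum>c\<in>A. \<Sum>e\<in>B. f c e + h c e - p c e - q c e) / 2" by (simp add: sum_divide_distrib)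
  also have "\<dots> = ((\<Sum>c\<in>A. \<Sum>e\<in>B. f c e) + (\<Sum>c\<in>A. \<Sum>e\<in>B. h c e)) / 2
    - ((\<Sum>c\<in>A. \<Sum>e\<in>B. p c e) + (\<Sum>c\<in>A. \<Sum>e\<in>B. q c e)) / 2"
    by (simp add: sum.distrib sum_subtractf field_simps)
  finally show ?thesis .
qed

lemma final_alg:
  fixes gi gm :: "'n::finite \<Rightarrow> 'n \<Rightarrow> real" and K X dG dL dD P :: "'n \<Rightarrow> real"
    and G lam D L :: real and A T H R :: "'n \<Rightarrow> 'n \<Rightarrow> real" and BK C E DR :: "'n \<Rightarrow> 'n \<Rightarrow> 'n \<Rightarrow> real"
  assumes gsym: "\<And>a b. gi a b = gi b a"
    and gg: "\<And>d b. (\<Sum>f\<in>UNIV. gi d f * gm f b) = (if d = b then 1 else 0)"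
    and hP: "\<And>b. P b = (\<Sum>e\<in>UNIV. gi b e * K e)"
    and hD: "D = (\<Sum>a\<in>UNIV. \<Sum>b\<in>UNIV. gi a b * A a b)"
    and hL: "L = (\<Sum>a\<in>UNIV. \<Sum>b\<in>UNIV. gi a b * H a b)"
    and hK: "\<And>a. K a = G * X a + dG a"
    and hA: "\<And>a b. A a b = dG a * X b + G * T a b + H a b"
    and hBK: "\<And>c a b. BK c a b = H c a * X b + dG a * T c b + dG c * T a b + G * C c a b + E c a b"
    and hE: "\<And>c a b. E c a b = E c b a"
    and hRK: "\<And>b. (\<Sum>a\<in>UNIV. \<Sum>c\<in>UNIV. gi a c * (BK c b a - BK b c a)) = (\<Sum>d\<in>UNIV. K d * (\<Sum>f\<in>UNIV. gi d f * R f b))"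
    and hRX: "\<And>b. (\<Sum>a\<in>UNIV. \<Sum>c\<in>UNIV. gi a c * (C c b a - C b c a)) = (\<Sum>d\<in>UNIV. X d * (\<Sum>f\<in>UNIV. gi d f * R f b))"
    and hRE: "\<And>b. (\<Sum>a\<in>UNIV. \<Sum>c\<in>UNIV. gi a c * (E c b a - E b c a)) = (\<Sum>d\<in>UNIV. dG d * (\<Sum>f\<in>UNIV. gi d f * R f b))"
    and hdD: "\<And>b. dD b = (\<Sum>a\<in>UNIV. \<Sum>c\<in>UNIV. gi a c * BK b a c)"
    and hdL: "\<And>b. dL b = (\<Sum>a\<in>UNIV. \<Sum>c\<in>UNIV. gi a c * E b a c)"
    and hR: "\<And>a b. R a b = 1/2 * X a * X b - (T a b + T b a) / 2 + lam * gm a b"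
    and hDR: "\<And>c a b. DR c a b = 1/2 * (T c a * X b + X a * T c b) - (C c a b + C c b a) / 2"
    and hB: "\<And>b. 2 * (\<Sum>a\<in>UNIV. \<Sum>c\<in>UNIV. gi a c * DR c a b) = (\<Sum>c\<in>UNIV. \<Sum>e\<in>UNIV. gi c e * DR b c e)"
    and G0: "G \<noteq> 0"
  shows "(\<Sum>a\<in>UNIV. \<Sum>b\<in>UNIV. \<Sum>c\<in>UNIV. \<Sum>d\<in>UNIV. ((A a b + A b a) / 2) * gi a c * gi b d * A c d)
    = (\<Sum>i\<in>UNIV. \<Sum>j\<in>UNIV. gi i j * ((\<Sum>b\<in>UNIV. (\<Sum>e\<in>UNIV. gi b e * A i e) * ((A j b + A b j) / 2))
         + (\<Sum>b\<in>UNIV. P b * ((BK i j b + BK i b j) / 2))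
         - ((1/2 * dL i + 1/2 * dD i + lam * dG i) * K j + (1/2 * L + 1/2 * D + lam * G) * A i j)))
      + D * (- (\<Sum>a\<in>UNIV. \<Sum>b\<in>UNIV. gi a b * K a * K b) / (2 * G) + 1/2 * L + 1/2 * D
             + 1 / (2 * G) * (\<Sum>c\<in>UNIV. P c * dG c) + lam * G)"
proof -
  define S where "S a b = (A a b + A b a) / 2" for a b
  define Xr where "Xr b = (\<Sum>e\<in>UNIV. gi b e * X e)" for b
  define dGr where "dGr b = (\<Sum>e\<in>UNIV. gi b e * dG e)" for b
  define divX where "divX = (\<Sum>a\<in>UNIV. \<Sum>b\<in>UNIV. gi a b * T a b)"
  define LHS where "LHS = (\<Sum>a\<in>UNIV. \<Sum>b\<in>UNIV. \<Sum>c\<in>UNIV. \<Sum>d\<in>UNIV. S a b * gi a c * gi b d * A c d)"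
  define Z2 where "Z2 = (\<Sum>b\<in>UNIV. P b * (\<Sum>i\<in>UNIV. \<Sum>j\<in>UNIV. gi i j * BK i j b))"
  define Z3 where "Z3 = (\<Sum>b\<in>UNIV. P b * (\<Sum>i\<in>UNIV. \<Sum>j\<in>UNIV. gi i j * BK i b j))"
  define RPP where "RPP = (\<Sum>b\<in>UNIV. P b * (\<Sum>d\<in>UNIV. K d * (\<Sum>f\<in>UNIV. gi d f * R f b)))"
  define PdL where "PdL = (\<Sum>b\<in>UNIV. P b * dL b)"
  define PdD where "PdD = (\<Sum>b\<in>UNIV. P b * dD b)"
  define PdG where "PdG = (\<Sum>b\<in>UNIV. P b * dG b)"
  define PX where "PX = (\<Sum>b\<in>UNIV. P b * X b)"
  define KK where "KK = (\<Sum>a\<in>UNIV. \<Sum>b\<in>UNIV. gi a b * K a * K b)"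
  have s1: "(\<Sum>i\<in>UNIV. \<Sum>j\<in>UNIV. gi i j * (\<Sum>b\<in>UNIV. (\<Sum>e\<in>UNIV. gi b e * A i e) * S j b)) = LHS"
  proof -
    have "(\<Sum>i\<in>UNIV. \<Sum>j\<in>UNIV. gi i j * (\<Sum>b\<in>UNIV. (\<Sum>e\<in>UNIV. gi b e * A i e) * S j b))
       = (\<Sum>i\<in>UNIV. \<Sum>j\<in>UNIV. \<Sum>b\<in>UNIV. (\<Sum>e\<in>UNIV. gi i j * gi b e * A i e * S j b))"
      by (simp add: sum_distrib_left sum_distrib_right mult_ac)
    also have "\<dots> = (\<Sum>j\<in>UNIV. \<Sum>b\<in>UNIV. \<Sum>i\<in>UNIV. (\<Sum>e\<in>UNIV. gi i j * gi b e * A i e * S j b))"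
      by (rule sum3_rot[symmetric])
    also have "\<dots> = LHS" unfolding LHS_def by (simp add: gsym mult_ac)
    finally show ?thesis .
  qed
  have s2: "(\<Sum>i\<in>UNIV. \<Sum>j\<in>UNIV. gi i j * (\<Sum>b\<in>UNIV. P b * ((BK i j b + BK i b j) / 2))) = Z2 / 2 + Z3 / 2"
  proof -
    have "(\<Sum>i\<in>UNIV. \<Sum>j\<in>UNIV. gi i j * (\<Sum>b\<in>UNIV. P b * ((BK i j b + BK i b j) / 2)))
       = (\<Sum>i\<in>UNIV. \<Sum>j\<in>UNIV. \<Sum>b\<in>UNIV. gi i j * (P b * ((BK i j b + BK i b j) / 2)))"
      by (simp add: sum_distrib_left)
    also have "\<dots> = (\<Sum>b\<in>UNIV. \<Sum>i\<in>UNIV. \<Sum>j\<in>UNIV. gi i j * (P b * ((BK i j b + BK i b j) / 2)))"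
      by (rule sum3_rot)
    also have "\<dots> = Z2 / 2 + Z3 / 2" unfolding Z2_def Z3_def
      by (simp add: sum_distrib_left sum.distrib sum_divide_distrib[symmetric] add_divide_distrib[symmetric] algebra_simps)
    finally show ?thesis .
  qed
  have s3: "(\<Sum>i\<in>UNIV. \<Sum>j\<in>UNIV. gi i j * ((1/2 * dL i + 1/2 * dD i + lam * dG i) * K j)) = PdL / 2 + PdD / 2 + lam * PdG"
  proof -
    have "(\<Sum>i\<in>UNIV. \<Sum>j\<in>UNIV. gi i j * (F i * K j)) = (\<Sum>i\<in>UNIV. F i * P i)" for F
      by (simp add: hP sum_distrib_left mult_ac)
    then have "(\<Sum>i\<in>UNIV. \<Sum>j\<in>UNIV. gi i j * ((1/2 * dL i + 1/2 * dD i + lam * dG i) * K j))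
       = (\<Sum>i\<in>UNIV. (1/2 * dL i + 1/2 * dD i + lam * dG i) * P i)" .
    also have "\<dots> = (\<Sum>i\<in>UNIV. P i * dL i / 2 + P i * dD i / 2 + lam * (P i * dG i))"
      by (rule sum.cong) (auto simp: algebra_simps)
    also have "\<dots> = PdL / 2 + PdD / 2 + lam * PdG" unfolding PdL_def PdD_def PdG_def
      by (simp only: sum.distrib sum_divide_distrib sum_distrib_left)
    finally show ?thesis .
  qed
  have s4: "(\<Sum>i\<in>UNIV. \<Sum>j\<in>UNIV. gi i j * ((1/2 * L + 1/2 * D + lam * G) * A i j)) = (1/2 * L + 1/2 * D + lam * G) * D"
  proof -
    have "(\<Sum>i\<in>UNIV. \<Sum>j\<in>UNIV. gi i j * (c * A i j)) = c * D" for c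
      by (simp add: hD sum_distrib_left mult_ac)
    then show ?thesis .
  qed
  have s5: "Z3 = PdD + RPP"
  proof -
    have a: "(\<Sum>a\<in>UNIV. \<Sum>c\<in>UNIV. gi a c * BK c b a) = (\<Sum>i\<in>UNIV. \<Sum>j\<in>UNIV. gi i j * BK i b j)" for b
      by (rule trans[OF sum.swap]) (simp add: gsym)
    have c: "(\<Sum>a\<in>UNIV. \<Sum>c\<in>UNIV. gi a c * BK b c a) = dD b" for b
      unfolding hdD by (rule trans[OF sum.swap]) (simp add: gsym)
    have "(\<Sum>i\<in>UNIV. \<Sum>j\<in>UNIV. gi i j * BK i b j) = dD b + (\<Sum>d\<in>UNIV. K d * (\<Sum>f\<in>UNIV. gi d f * R f b))" for b
      using hRK[of b] a[of b] c[of b] by (simp add: right_diff_distrib sum_subtractf)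
    then show ?thesis unfolding Z3_def PdD_def RPP_def by (simp add: distrib_left sum.distrib)
  qed
  have s6: "KK - PdG = G * PX"
  proof -
    have "KK = (\<Sum>b\<in>UNIV. P b * K b)" unfolding KK_def hP by (simp add: sum_distrib_right sum_distrib_left mult_ac)
    also have "\<dots> = G * PX + PdG" unfolding PX_def PdG_def hK
      by (simp add: distrib_left sum.distrib sum_distrib_left mult_ac)
    finally show ?thesis by simp
  qed
  have s7: "Z2 + RPP = PdL + 2 * lam * PdG + D * PX"
  proof -
    define dT where "dT b = (\<Sum>c\<in>UNIV. dGr c * T c b)" for b
    define dT' where "dT' b = (\<Sum>c\<in>UNIV. dGr c * T b c)" for b
    define XT where "XT b = (\<Sum>c\<in>UNIV. Xr c * T c b)" for b
    define TX where "TX b = (\<Sum>c\<in>UNIV. Xr c * T b c)" for b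
    define XR where "XR b = (\<Sum>d\<in>UNIV. X d * (\<Sum>f\<in>UNIV. gi d f * R f b))" for b
    define dR where "dR b = (\<Sum>d\<in>UNIV. dG d * (\<Sum>f\<in>UNIV. gi d f * R f b))" for b
    define CC where "CC b = (\<Sum>i\<in>UNIV. \<Sum>j\<in>UNIV. gi i j * C i j b)" for b
    define EE where "EE b = (\<Sum>i\<in>UNIV. \<Sum>j\<in>UNIV. gi i j * E i j b)" for b
    define dGX where "dGX = (\<Sum>f\<in>UNIV. dGr f * X f)"
    have swapg: "(\<Sum>a\<in>UNIV. \<Sum>c\<in>UNIV. gi a c * F c a) = (\<Sum>i\<in>UNIV. \<Sum>j\<in>UNIV. gi i j * F i j)" for F
      by (rule trans[OF sum.swap]) (simp add: gsym)
    have a: "(\<Sum>i\<in>UNIV. \<Sum>j\<in>UNIV. gi i j * BK i j b) = L * X b + 2 * dT b + G * CC b + EE b" for b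
    proof -
      have 1: "(\<Sum>i\<in>UNIV. \<Sum>j\<in>UNIV. gi i j * (dG j * T i b)) = dT b"
        unfolding dT_def dGr_def by (simp add: sum_distrib_left sum_distrib_right mult_ac)
      have 2: "(\<Sum>i\<in>UNIV. \<Sum>j\<in>UNIV. gi i j * (dG i * T j b)) = dT b"
        using swapg[of "\<lambda>i j. dG j * T i b"] 1 by simp
      have "(\<Sum>i\<in>UNIV. \<Sum>j\<in>UNIV. gi i j * BK i j b)
        = (\<Sum>i\<in>UNIV. \<Sum>j\<in>UNIV. gi i j * H i j) * X b + (\<Sum>i\<in>UNIV. \<Sum>j\<in>UNIV. gi i j * (dG j * T i b))
          + (\<Sum>i\<in>UNIV. \<Sum>j\<in>UNIV. gi i j * (dG i * T j b)) + G * CC b + EE b"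
        unfolding hBK CC_def EE_def by (simp add: distrib_left sum.distrib sum_distrib_left sum_distrib_right mult_ac)
      then show ?thesis unfolding 1 2 hL[symmetric] by simp
    qed
    have b: "EE b = dL b + dR b" for b
    proof -
      have "EE b = (\<Sum>i\<in>UNIV. \<Sum>j\<in>UNIV. gi i j * E i b j)" unfolding EE_def using hE by simp
      also have "\<dots> = (\<Sum>a\<in>UNIV. \<Sum>c\<in>UNIV. gi a c * E c b a)" by (rule swapg[symmetric])
      also have "\<dots> = (\<Sum>a\<in>UNIV. \<Sum>c\<in>UNIV. gi a c * E b c a) + dR b"
        using hRE[of b] unfolding dR_def by (simp add: right_diff_distrib sum_subtractf)
      also have "(\<Sum>a\<in>UNIV. \<Sum>c\<in>UNIV. gi a c * E b c a) = dL b"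
        unfolding hdL using swapg[of "\<lambda>c a. E b a c"] by simp
      finally show ?thesis .
    qed
    have c: "CC b = divX * X b + XT b - TX b - XR b" for b
    proof -
      have l: "2 * (\<Sum>a\<in>UNIV. \<Sum>c\<in>UNIV. gi a c * DR c a b) = divX * X b + XT b
          - CC b - (\<Sum>a\<in>UNIV. \<Sum>c\<in>UNIV. gi a c * C c b a)"
      proof -
        have e1: "(\<Sum>a\<in>UNIV. \<Sum>c\<in>UNIV. gi a c * (T c a * X b)) = divX * X b"
          unfolding divX_def using swapg[of "\<lambda>c a. T c a * X b"] by (simp add: sum_distrib_right sum_distrib_left mult_ac)
        have e2: "(\<Sum>a\<in>UNIV. \<Sum>c\<in>UNIV. gi a c * (X a * T c b)) = XT b"
          unfolding XT_def Xr_def using swapg[of "\<lambda>c a. X a * T c b"]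
          by (simp add: sum_distrib_right sum_distrib_left mult_ac)
        have e3: "(\<Sum>a\<in>UNIV. \<Sum>c\<in>UNIV. gi a c * C c a b) = CC b"
          unfolding CC_def using swapg[of "\<lambda>c a. C c a b"] by simp
        have "2 * (\<Sum>a\<in>UNIV. \<Sum>c\<in>UNIV. gi a c * DR c a b)
          = (\<Sum>a\<in>UNIV. \<Sum>c\<in>UNIV. gi a c * (T c a * X b)) + (\<Sum>a\<in>UNIV. \<Sum>c\<in>UNIV. gi a c * (X a * T c b))
            - (\<Sum>a\<in>UNIV. \<Sum>c\<in>UNIV. gi a c * C c a b) - (\<Sum>a\<in>UNIV. \<Sum>c\<in>UNIV. gi a c * C c b a)"
        proof -
          have "2 * (\<Sum>a\<in>UNIV. \<Sum>c\<in>UNIV. gi a c * DR c a b)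
             = (\<Sum>a\<in>UNIV. \<Sum>c\<in>UNIV. gi a c * (T c a * X b) + gi a c * (X a * T c b) - gi a c * C c a b - gi a c * C c b a)"
            unfolding sum_distrib_left by (intro sum.cong refl) (simp add: hDR field_simps)
          then show ?thesis by (simp add: sum.distrib sum_subtractf)
        qed
        then show ?thesis unfolding e1 e2 e3 .
      qed
      have r: "(\<Sum>c\<in>UNIV. \<Sum>e\<in>UNIV. gi c e * DR b c e) = TX b - (\<Sum>a\<in>UNIV. \<Sum>c\<in>UNIV. gi a c * C b c a)"
      proof -
        have e1: "(\<Sum>c\<in>UNIV. \<Sum>e\<in>UNIV. gi c e * (T b c * X e)) = TX b"
          unfolding TX_def Xr_def by (simp add: sum_distrib_left sum_distrib_right mult_ac)
        have e2: "(\<Sum>c\<in>UNIV. \<Sum>e\<in>UNIV. gi c e * (X c * T b e)) = TX b"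
          using swapg[of "\<lambda>e c. X c * T b e"] e1 unfolding TX_def Xr_def
          by (simp add: sum_distrib_left sum_distrib_right mult_ac)
        have e3: "(\<Sum>c\<in>UNIV. \<Sum>e\<in>UNIV. gi c e * C b e c) = (\<Sum>a\<in>UNIV. \<Sum>c\<in>UNIV. gi a c * C b c a)"
          by simp
        have e4: "(\<Sum>c\<in>UNIV. \<Sum>e\<in>UNIV. gi c e * C b c e) = (\<Sum>a\<in>UNIV. \<Sum>c\<in>UNIV. gi a c * C b c a)"
          using swapg[of "\<lambda>c a. C b a c"] by simp
        have "(\<Sum>c\<in>UNIV. \<Sum>e\<in>UNIV. gi c e * DR b c e)
          = ((\<Sum>c\<in>UNIV. \<Sum>e\<in>UNIV. gi c e * (T b c * X e)) + (\<Sum>c\<in>UNIV. \<Sum>e\<in>UNIV. gi c e * (X c * T b e))) / 2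
            - ((\<Sum>c\<in>UNIV. \<Sum>e\<in>UNIV. gi c e * C b c e) + (\<Sum>c\<in>UNIV. \<Sum>e\<in>UNIV. gi c e * C b e c)) / 2"
        proof -
          have "(\<Sum>c\<in>UNIV. \<Sum>e\<in>UNIV. gi c e * DR b c e)
             = (\<Sum>c\<in>UNIV. \<Sum>e\<in>UNIV. (gi c e * (T b c * X e) + gi c e * (X c * T b e)) / 2 - (gi c e * C b c e + gi c e * C b e c) / 2)"
            by (intro sum.cong refl) (simp add: hDR field_simps)
          then show ?thesis by (simp only: sum2_half)
        qed
        then show ?thesis unfolding e1 e2 e4 by simp
      qed
      have x: "(\<Sum>a\<in>UNIV. \<Sum>c\<in>UNIV. gi a c * C c b a) = (\<Sum>a\<in>UNIV. \<Sum>c\<in>UNIV. gi a c * C b c a) + XR b"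
        using hRX[of b] unfolding XR_def by (simp add: right_diff_distrib sum_subtractf)
      show ?thesis using hB[of b] l r x by linarith
    qed
    have d: "(\<Sum>d\<in>UNIV. K d * (\<Sum>f\<in>UNIV. gi d f * R f b)) = G * XR b + dR b" for b
      unfolding XR_def dR_def hK by (simp add: distrib_left distrib_right sum.distrib sum_distrib_left mult_ac)
    have f: "dR b = dGX * X b / 2 - dT b / 2 - dT' b / 2 + lam * dG b" for b
    proof -
      have 1: "dR b = (\<Sum>f\<in>UNIV. dGr f * R f b)"
        unfolding dR_def dGr_def by (simp only: sum_mul_swap) (simp add: gsym mult.commute)
      have 2: "(\<Sum>f\<in>UNIV. dGr f * gm f b) = dG b"
      proof -
        have "(\<Sum>f\<in>UNIV. dGr f * gm f b) = (\<Sum>d\<in>UNIV. dG d * (\<Sum>f\<in>UNIV. gi d f * gm f b))"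
          unfolding dGr_def by (simp only: sum_mul_swap) (simp add: gsym mult.commute)
        also have "\<dots> = dG b" unfolding gg by (simp add: if_distrib cong: if_cong)
        finally show ?thesis .
      qed
      have "(\<Sum>f\<in>UNIV. dGr f * R f b) = dGX * X b / 2 - dT b / 2 - dT' b / 2 + lam * (\<Sum>f\<in>UNIV. dGr f * gm f b)"
        unfolding hR dGX_def dT_def dT'_def
        by (simp add: sum_distrib_left sum_distrib_right sum.distrib sum_subtractf sum_divide_distrib add_divide_distrib algebra_simps)
      then show ?thesis unfolding 1 2 .
    qed
    have g1: "(\<Sum>a\<in>UNIV. \<Sum>b\<in>UNIV. gi a b * (dG a * X b)) = dGX"
      unfolding dGX_def dGr_def by (rule trans[OF sum.swap]) (simp add: sum_distrib_right sum_distrib_left gsym mult_ac)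
    have g2: "D = (\<Sum>a\<in>UNIV. \<Sum>b\<in>UNIV. gi a b * (dG a * X b)) + G * divX + L"
      unfolding hD hA divX_def hL by (simp add: distrib_left sum.distrib sum_distrib_left mult_ac)
    have g: "D = dGX + G * divX + L" using g1 g2 by simp
    have h: "P b = G * Xr b + dGr b" for b
      unfolding hP hK Xr_def dGr_def by (simp add: distrib_left sum.distrib sum_distrib_left mult_ac)
    have i1: "dT b + G * XT b = (\<Sum>c\<in>UNIV. P c * T c b)" for b
      unfolding dT_def XT_def h by (simp add: distrib_left distrib_right sum.distrib sum_distrib_left mult_ac)
    have i2: "dT' b + G * TX b = (\<Sum>c\<in>UNIV. P c * T b c)" for b
      unfolding dT'_def TX_def h by (simp add: distrib_left distrib_right sum.distrib sum_distrib_left mult_ac)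
    have i3: "(\<Sum>b\<in>UNIV. P b * (\<Sum>c\<in>UNIV. P c * T c b)) = (\<Sum>b\<in>UNIV. P b * (\<Sum>c\<in>UNIV. P c * T b c))"
      unfolding sum_distrib_left by (rule trans[OF sum.swap]) (simp add: mult_ac)
    have inner: "(\<Sum>i\<in>UNIV. \<Sum>j\<in>UNIV. gi i j * BK i j b) + (\<Sum>d\<in>UNIV. K d * (\<Sum>f\<in>UNIV. gi d f * R f b))
       = (L + G * divX + dGX) * X b + dL b + 2 * lam * dG b + ((dT b + G * XT b) - (dT' b + G * TX b))" for b
      unfolding a b c d f by (simp add: algebra_simps)
    have "Z2 + RPP = (\<Sum>b\<in>UNIV. P b * ((\<Sum>i\<in>UNIV. \<Sum>j\<in>UNIV. gi i j * BK i j b) + (\<Sum>d\<in>UNIV. K d * (\<Sum>f\<in>UNIV. gi d f * R f b))))"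
      unfolding Z2_def RPP_def by (simp add: distrib_left sum.distrib)
    also have "\<dots> = (\<Sum>b\<in>UNIV. P b * ((L + G * divX + dGX) * X b + dL b + 2 * lam * dG b + ((\<Sum>c\<in>UNIV. P c * T c b) - (\<Sum>c\<in>UNIV. P c * T b c))))"
      unfolding inner i1 i2 ..
    also have "\<dots> = (L + G * divX + dGX) * PX + PdL + 2 * lam * PdG
       + ((\<Sum>b\<in>UNIV. P b * (\<Sum>c\<in>UNIV. P c * T c b)) - (\<Sum>b\<in>UNIV. P b * (\<Sum>c\<in>UNIV. P c * T b c)))"
      unfolding PX_def PdL_def PdG_def
      by (simp add: distrib_left right_diff_distrib sum.distrib sum_subtractf sum_distrib_left mult_ac)
    also have "\<dots> = PdL + 2 * lam * PdG + D * PX" unfolding i3 g by (simp add: algebra_simps)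
    finally show ?thesis .
  qed
  have main: "(\<Sum>i\<in>UNIV. \<Sum>j\<in>UNIV. gi i j * ((\<Sum>b\<in>UNIV. (\<Sum>e\<in>UNIV. gi b e * A i e) * S j b)
         + (\<Sum>b\<in>UNIV. P b * ((BK i j b + BK i b j) / 2))
         - ((1/2 * dL i + 1/2 * dD i + lam * dG i) * K j + (1/2 * L + 1/2 * D + lam * G) * A i j)))
     = LHS + Z2 / 2 + Z3 / 2 - (PdL / 2 + PdD / 2 + lam * PdG) - (1/2 * L + 1/2 * D + lam * G) * D"
    by (subst sum2_split4) (simp only: s1 s2 s3 s4)
  have fin: "LHS = LHS + Z2 / 2 + Z3 / 2 - (PdL / 2 + PdD / 2 + lam * PdG) - (1/2 * L + 1/2 * D + lam * G) * D
      + D * (- KK / (2 * G) + 1/2 * L + 1/2 * D + 1 / (2 * G) * PdG + lam * G)"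
  proof -
    have e: "- KK / (2 * G) + 1 / (2 * G) * PdG = - PX / 2" using s6 G0 by (simp add: field_simps)
    have "D * (- KK / (2 * G) + 1/2 * L + 1/2 * D + 1 / (2 * G) * PdG + lam * G)
       = D * ((- KK / (2 * G) + 1 / (2 * G) * PdG) + (1/2 * L + 1/2 * D + lam * G))" by (simp add: algebra_simps)
    also have "\<dots> = D * (- PX / 2) + D * (1/2 * L + 1/2 * D + lam * G)" unfolding e by (simp add: algebra_simps)
    finally have e2: "D * (- KK / (2 * G) + 1/2 * L + 1/2 * D + 1 / (2 * G) * PdG + lam * G) = D * (- PX / 2) + D * (1/2 * L + 1/2 * D + lam * G)" .
    have z2: "Z2 = PdL + 2 * lam * PdG + D * PX - RPP" using s7 by simp
    show ?thesis unfolding e2 z2 s5 by (simp add: field_simps)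
  qed
  show ?thesis using fin main unfolding LHS_def S_def KK_def PdG_def by simp
qed


locale soliton = rmet U g for U :: "(real^'n::finite) set" and g +
  fixes X :: "real^'n \<Rightarrow> 'n \<Rightarrow> real" and Gam :: "real^'n \<Rightarrow> real" and lam :: real and K :: "real^'n \<Rightarrow> 'n \<Rightarrow> real"
  assumes X_smooth: "\<forall>a. smooth_on U (\<lambda>x. X x a)"
    and Gam_smooth: "smooth_on U Gam"
    and Gam_pos: "\<forall>x\<in>U. Gam x > 0"
    and K_def: "\<forall>x a. K x a = Gam x * X x a + grad Gam x a"
    and ricci_eq: "\<forall>x\<in>U. \<forall>a b. ricci g x a b = (1/2) * X x a * X x b - sym_cov_d g X x a b + lam * g x a b"
begin

lemma Xs[simp]: "smooth_on U (\<lambda>y. X y a)" using X_smooth by blast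
lemma Gs[simp]: "smooth_on U Gam" using Gam_smooth by blast
lemma Kfun: "K = (\<lambda>y a. Gam y * X y a + grad Gam y a)" using K_def by (intro ext) simp
lemma Ks[simp]: "smooth_on U (\<lambda>y. K y a)" unfolding Kfun by simp

abbreviation "Hh \<equiv> cov_d g (grad Gam)"

lemma Hs[simp]: "smooth_on U (\<lambda>y. Hh y a b)" by simp

lemma kA: assumes y: "y \<in> U"
  shows "cov_d g K y a b = pd a Gam y * X y b + Gam y * cov_d g X y a b + Hh y a b"
proof -
  have "cov_d g K y a b = cov_d g (\<lambda>y a. Gam y * X y a + grad Gam y a) y a b" unfolding Kfun ..
  also have "\<dots> = cov_d g (\<lambda>y a. Gam y * X y a) y a b + Hh y a b"
    by (rule cov_add) (simp_all add: y)
  also have "cov_d g (\<lambda>y a. Gam y * X y a) y a b = pd a Gam y * X y b + Gam y * cov_d g X y a b"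
    by (rule cov_fmul) (simp_all add: y)
  finally show ?thesis .
qed

lemma kBK: assumes x: "x \<in> U"
  shows "cd2 g (cov_d g K) x c a b = Hh x c a * X x b + pd a Gam x * cov_d g X x c b + pd c Gam x * cov_d g X x a b
     + Gam x * cd2 g (cov_d g X) x c a b + cd2 g Hh x c a b"
proof -
  have "cd2 g (cov_d g K) x c a b = cd2 g (\<lambda>y a b. (grad Gam y a * X y b + Gam y * cov_d g X y a b) + Hh y a b) x c a b"
    by (rule cd2_cong[OF x]) (simp add: kA grad_def)
  also have "\<dots> = cd2 g (\<lambda>y a b. grad Gam y a * X y b + Gam y * cov_d g X y a b) x c a b + cd2 g Hh x c a b"
    by (rule cd2_add) (simp_all add: x)
  also have "cd2 g (\<lambda>y a b. grad Gam y a * X y b + Gam y * cov_d g X y a b) x c a b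
     = cd2 g (\<lambda>y a b. grad Gam y a * X y b) x c a b + cd2 g (\<lambda>y a b. Gam y * cov_d g X y a b) x c a b"
    by (rule cd2_add) (simp_all add: x)
  also have "cd2 g (\<lambda>y a b. grad Gam y a * X y b) x c a b = Hh x c a * X x b + grad Gam x a * cov_d g X x c b"
    by (rule cd2_prod) (simp_all add: x)
  also have "cd2 g (\<lambda>y a b. Gam y * cov_d g X y a b) x c a b = pd c Gam x * cov_d g X x a b + Gam x * cd2 g (cov_d g X) x c a b"
    by (rule cd2_fmul) (simp_all add: x)
  moreover have "grad Gam x a = pd a Gam x" by (simp add: grad_def)
  ultimately show ?thesis by simp
qed

lemma Hsym: assumes y: "y \<in> U" shows "Hh y a b = Hh y b a"
proof -
  have "pd a (pd b Gam) y = pd b (pd a Gam) y" by (rule clairaut[OF opnU Gs y])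
  then show ?thesis unfolding cov_d_def grad_def using chr_sym[OF y] by simp
qed

lemma Esym: assumes x: "x \<in> U" shows "cd2 g Hh x c a b = cd2 g Hh x c b a"
proof -
  have "cd2 g Hh x c a b = cd2 g (\<lambda>y a b. Hh y b a) x c a b"
    by (rule cd2_cong[OF x]) (simp add: Hsym)
  then show ?thesis using cd2_transp[of Hh x c a b] by simp
qed

lemma dR: assumes x: "x \<in> U"
  shows "cd2 g (ricci g) x c a b = 1/2 * (cov_d g X x c a * X x b + X x a * cov_d g X x c b)
     - (cd2 g (cov_d g X) x c a b + cd2 g (cov_d g X) x c b a) / 2"
proof -
  have "cd2 g (ricci g) x c a b = cd2 g (\<lambda>y a b. ((\<lambda>y. 1/2) y * (X y a * X y b) - sym_cov_d g X y a b) + (\<lambda>y. lam) y * g y a b) x c a b"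
    by (rule cd2_cong[OF x]) (simp add: ricci_eq)
  also have "\<dots> = cd2 g (\<lambda>y a b. (\<lambda>y. 1/2) y * (X y a * X y b) - sym_cov_d g X y a b) x c a b + cd2 g (\<lambda>y a b. (\<lambda>y. lam) y * g y a b) x c a b"
    by (rule cd2_add) (simp_all add: x)
  also have "cd2 g (\<lambda>y a b. (\<lambda>y. lam) y * g y a b) x c a b = 0"
    using cd2_fmul[of "\<lambda>y. lam" g x c a b] x by (simp add: pd_const cd2_g)
  also have "cd2 g (\<lambda>y a b. (\<lambda>y. 1/2) y * (X y a * X y b) - sym_cov_d g X y a b) x c a b
     = cd2 g (\<lambda>y a b. (\<lambda>y. 1/2) y * (X y a * X y b)) x c a b - cd2 g (sym_cov_d g X) x c a b"
    by (rule cd2_sub) (simp_all add: x)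
  also have "cd2 g (\<lambda>y a b. (\<lambda>y. 1/2) y * (X y a * X y b)) x c a b = 1/2 * cd2 g (\<lambda>y a b. X y a * X y b) x c a b"
    using cd2_fmul[of "\<lambda>y. 1/2" "\<lambda>y a b. X y a * X y b" x c a b] x by (simp add: pd_const)
  also have "cd2 g (\<lambda>y a b. X y a * X y b) x c a b = cov_d g X x c a * X x b + X x a * cov_d g X x c b"
    by (rule cd2_prod) (simp_all add: x)
  also have "cd2 g (sym_cov_d g X) x c a b = (cd2 g (cov_d g X) x c a b + cd2 g (cov_d g X) x c b a) / 2"
    by (rule cd2_sym) (simp_all add: x)
  finally show ?thesis by simp
qed


lemma pd_divc: assumes "smooth_on U f" "x \<in> U" shows "pd i (\<lambda>y. f y / c) x = pd i f x / c"
proof -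
  have "pd i (\<lambda>y. (1/c) * f y) x = (1/c) * pd i f x"
    by (rule pd_cmult) (rule smooth_diff_at[OF opnU assms])
  then show ?thesis by simp
qed

lemma divV: assumes x: "x \<in> U"
  shows "divg g (\<lambda>y a. (\<Sum>b\<in>UNIV. raise g K y b * sym_cov_d g K y a b)
                    - (1/2) * K y a * laplacian g Gam y
                    - (1/2) * K y a * divg g K y
                    - lam * Gam y * K y a) x
    = (\<Sum>i\<in>UNIV. \<Sum>j\<in>UNIV. ginv g x i j * ((\<Sum>b\<in>UNIV. (\<Sum>e\<in>UNIV. ginv g x b e * cov_d g K x i e) * ((cov_d g K x j b + cov_d g K x b j) / 2))
         + (\<Sum>b\<in>UNIV. raise g K x b * ((cd2 g (cov_d g K) x i j b + cd2 g (cov_d g K) x i b j) / 2))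
         - ((1/2 * pd i (laplacian g Gam) x + 1/2 * pd i (divg g K) x + lam * pd i Gam x) * K x j
            + (1/2 * laplacian g Gam x + 1/2 * divg g K x + lam * Gam x) * cov_d g K x i j)))"
proof -
  define f where "f y = 1/2 * laplacian g Gam y + 1/2 * divg g K y + lam * Gam y" for y
  have fs: "smooth_on U f" unfolding f_def by simp
  have V: "(\<lambda>y a. (\<Sum>b\<in>UNIV. raise g K y b * sym_cov_d g K y a b)
                    - (1/2) * K y a * laplacian g Gam y
                    - (1/2) * K y a * divg g K y
                    - lam * Gam y * K y a) = (\<lambda>y a. (\<Sum>b\<in>UNIV. raise g K y b * sym_cov_d g K y a b) - f y * K y a)"
    unfolding f_def by (intro ext) (simp add: algebra_simps)
  have pf: "pd i f x = 1/2 * pd i (laplacian g Gam) x + 1/2 * pd i (divg g K) x + lam * pd i Gam x" for i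
  proof -
    have "pd i f x = pd i (\<lambda>y. (\<lambda>y. 1/2) y * laplacian g Gam y + (\<lambda>y. 1/2) y * divg g K y + (\<lambda>y. lam) y * Gam y) x"
      unfolding f_def by simp
    also have "\<dots> = 1/2 * pd i (laplacian g Gam) x + 1/2 * pd i (divg g K) x + lam * pd i Gam x"
      using x by (simp add: pd_rules pd_const pd_divc)
    finally show ?thesis .
  qed
  have cv: "cov_d g (\<lambda>y a. (\<Sum>b\<in>UNIV. raise g K y b * sym_cov_d g K y a b) - f y * K y a) x i j
     = (\<Sum>b\<in>UNIV. (\<Sum>e\<in>UNIV. ginv g x b e * cov_d g K x i e) * ((cov_d g K x j b + cov_d g K x b j) / 2))
         + (\<Sum>b\<in>UNIV. raise g K x b * ((cd2 g (cov_d g K) x i j b + cd2 g (cov_d g K) x i b j) / 2))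
         - ((1/2 * pd i (laplacian g Gam) x + 1/2 * pd i (divg g K) x + lam * pd i Gam x) * K x j
            + (1/2 * laplacian g Gam x + 1/2 * divg g K x + lam * Gam x) * cov_d g K x i j)" for i j
  proof -
    have "cov_d g (\<lambda>y a. (\<Sum>b\<in>UNIV. raise g K y b * sym_cov_d g K y a b) - f y * K y a) x i j
       = cov_d g (\<lambda>y a. \<Sum>b\<in>UNIV. raise g K y b * sym_cov_d g K y a b) x i j - cov_d g (\<lambda>y a. f y * K y a) x i j"
      by (rule cov_sub) (simp_all add: x fs)
    also have "cov_d g (\<lambda>y a. f y * K y a) x i j = pd i f x * K x j + f x * cov_d g K x i j"
      by (rule cov_fmul) (simp_all add: x fs)
    also have "cov_d g (\<lambda>y a. \<Sum>b\<in>UNIV. raise g K y b * sym_cov_d g K y a b) x i j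
       = (\<Sum>b\<in>UNIV. (\<Sum>e\<in>UNIV. ginv g x b e * cov_d g K x i e) * sym_cov_d g K x j b)
         + (\<Sum>b\<in>UNIV. raise g K x b * cd2 g (sym_cov_d g K) x i j b)"
      by (rule cov_contr) (simp_all add: x)
    also have "(\<lambda>b. cd2 g (sym_cov_d g K) x i j b) = (\<lambda>b. (cd2 g (cov_d g K) x i j b + cd2 g (cov_d g K) x i b j) / 2)"
      by (intro ext cd2_sym) (simp_all add: x)
    finally have "cov_d g (\<lambda>y a. (\<Sum>b\<in>UNIV. raise g K y b * sym_cov_d g K y a b) - f y * K y a) x i j
      = (\<Sum>b\<in>UNIV. (\<Sum>e\<in>UNIV. ginv g x b e * cov_d g K x i e) * sym_cov_d g K x j b) +
        (\<Sum>b\<in>UNIV. raise g K x b * ((cd2 g (cov_d g K) x i j b + cd2 g (cov_d g K) x i b j) / 2)) -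
        (pd i f x * K x j + f x * cov_d g K x i j)" .
    moreover have fx: "f x = 1/2 * laplacian g Gam x + 1/2 * divg g K x + lam * Gam x" by (simp add: f_def)
    ultimately show ?thesis unfolding pf fx sym_cov_d_def by simp
  qed
  show ?thesis unfolding V divg_def[of g _ x] cv ..
qed

lemma main_at: assumes x: "x \<in> U"
  shows "(\<Sum>a\<in>UNIV. \<Sum>b\<in>UNIV. \<Sum>c\<in>UNIV. \<Sum>d\<in>UNIV. sym_cov_d g K x a b * ginv g x a c * ginv g x b d * cov_d g K x c d)
    = divg g (\<lambda>y a. (\<Sum>b\<in>UNIV. raise g K y b * sym_cov_d g K y a b)
                    - (1/2) * K y a * laplacian g Gam y
                    - (1/2) * K y a * divg g K y
                    - lam * Gam y * K y a) x
      + divg g K x *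
        ( - (\<Sum>a\<in>UNIV. \<Sum>b\<in>UNIV. ginv g x a b * K x a * K x b) / (2 * Gam x)
          + (1/2) * laplacian g Gam x
          + (1/2) * divg g K x
          + (1 / (2 * Gam x)) * (\<Sum>c\<in>UNIV. raise g K x c * grad Gam x c)
          + lam * Gam x)"
proof -
  have gr: "grad Gam x c = pd c Gam x" for c by (simp add: grad_def)
  have dD: "pd b (divg g K) x = (\<Sum>a\<in>UNIV. \<Sum>c\<in>UNIV. ginv g x a c * cd2 g (cov_d g K) x b a c)" for b
  proof -
    have "divg g K = (\<lambda>y. \<Sum>a\<in>UNIV. \<Sum>c\<in>UNIV. ginv g y a c * cov_d g K y a c)" by (intro ext) (simp add: divg_def)
    then show ?thesis using trace_d[of "cov_d g K" x b] x by simp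
  qed
  have dL: "pd b (laplacian g Gam) x = (\<Sum>a\<in>UNIV. \<Sum>c\<in>UNIV. ginv g x a c * cd2 g Hh x b a c)" for b
  proof -
    have "laplacian g Gam = (\<lambda>y. \<Sum>a\<in>UNIV. \<Sum>c\<in>UNIV. ginv g y a c * Hh y a c)" by (intro ext) (simp add: laplacian_def divg_def)
    then show ?thesis using trace_d[of Hh x b] x by simp
  qed
  have RE: "(\<Sum>a\<in>UNIV. \<Sum>c\<in>UNIV. ginv g x a c * (cd2 g Hh x c b a - cd2 g Hh x b c a))
     = (\<Sum>d\<in>UNIV. pd d Gam x * (\<Sum>f\<in>UNIV. ginv g x d f * ricci g x f b))" for b
    using ricci_identity_contr[of "grad Gam" x b] x by (simp add: gr)
  have hR: "ricci g x a b = 1/2 * X x a * X x b - (cov_d g X x a b + cov_d g X x b a) / 2 + lam * g x a b" for a b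
    using ricci_eq x by (simp add: sym_cov_d_def)
  have L: "laplacian g Gam x = (\<Sum>a\<in>UNIV. \<Sum>b\<in>UNIV. ginv g x a b * Hh x a b)"
    by (simp add: laplacian_def divg_def)
  have A: "\<And>a b. cov_d g K x a b = pd a Gam x * X x b + Gam x * cov_d g X x a b + Hh x a b"
    by (rule kA[OF x])
  have fa: "(\<Sum>a\<in>UNIV. \<Sum>b\<in>UNIV. \<Sum>c\<in>UNIV. \<Sum>d\<in>UNIV. ((cov_d g K x a b + cov_d g K x b a) / 2) * ginv g x a c * ginv g x b d * cov_d g K x c d)
    = (\<Sum>i\<in>UNIV. \<Sum>j\<in>UNIV. ginv g x i j * ((\<Sum>b\<in>UNIV. (\<Sum>e\<in>UNIV. ginv g x b e * cov_d g K x i e) * ((cov_d g K x j b + cov_d g K x b j) / 2))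
         + (\<Sum>b\<in>UNIV. raise g K x b * ((cd2 g (cov_d g K) x i j b + cd2 g (cov_d g K) x i b j) / 2))
         - ((1/2 * pd i (laplacian g Gam) x + 1/2 * pd i (divg g K) x + lam * pd i Gam x) * K x j
            + (1/2 * laplacian g Gam x + 1/2 * divg g K x + lam * Gam x) * cov_d g K x i j)))
      + divg g K x * (- (\<Sum>a\<in>UNIV. \<Sum>b\<in>UNIV. ginv g x a b * K x a * K x b) / (2 * Gam x) + 1/2 * laplacian g Gam x + 1/2 * divg g K x
             + 1 / (2 * Gam x) * (\<Sum>c\<in>UNIV. raise g K x c * pd c Gam x) + lam * Gam x)"
  proof (rule final_alg[where gi = "ginv g x" and gm = "g x" and T = "cov_d g X x" and H = "Hh x" and R = "ricci g x"
        and C = "cd2 g (cov_d g X) x" and E = "cd2 g Hh x" and DR = "cd2 g (ricci g) x" and X = "X x"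
        and dL = "\<lambda>b. pd b (laplacian g Gam) x" and dD = "\<lambda>b. pd b (divg g K) x"])
    show "\<And>a b. ginv g x a b = ginv g x b a" by (rule ginv_sym[OF x])
    show "\<And>d b. (\<Sum>f\<in>UNIV. ginv g x d f * g x f b) = (if d = b then 1 else 0)" by (rule ginv_l[OF x])
    show "\<And>b. raise g K x b = (\<Sum>e\<in>UNIV. ginv g x b e * K x e)" by (simp add: raise_def)
    show "divg g K x = (\<Sum>a\<in>UNIV. \<Sum>b\<in>UNIV. ginv g x a b * cov_d g K x a b)" by (simp add: divg_def)
    show "laplacian g Gam x = (\<Sum>a\<in>UNIV. \<Sum>b\<in>UNIV. ginv g x a b * Hh x a b)" by (rule L)
    show "\<And>a. K x a = Gam x * X x a + pd a Gam x" using K_def by (simp add: grad_def)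
    show "\<And>a b. cov_d g K x a b = pd a Gam x * X x b + Gam x * cov_d g X x a b + Hh x a b" by (rule A)
    show "\<And>c a b. cd2 g (cov_d g K) x c a b = Hh x c a * X x b + pd a Gam x * cov_d g X x c b + pd c Gam x * cov_d g X x a b
        + Gam x * cd2 g (cov_d g X) x c a b + cd2 g Hh x c a b" by (rule kBK[OF x])
    show "\<And>c a b. cd2 g Hh x c a b = cd2 g Hh x c b a" by (rule Esym[OF x])
    show "\<And>b. (\<Sum>a\<in>UNIV. \<Sum>c\<in>UNIV. ginv g x a c * (cd2 g (cov_d g K) x c b a - cd2 g (cov_d g K) x b c a))
        = (\<Sum>d\<in>UNIV. K x d * (\<Sum>f\<in>UNIV. ginv g x d f * ricci g x f b))"
      using ricci_identity_contr[of K x] x by simp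
    show "\<And>b. (\<Sum>a\<in>UNIV. \<Sum>c\<in>UNIV. ginv g x a c * (cd2 g (cov_d g X) x c b a - cd2 g (cov_d g X) x b c a))
        = (\<Sum>d\<in>UNIV. X x d * (\<Sum>f\<in>UNIV. ginv g x d f * ricci g x f b))"
      using ricci_identity_contr[of X x] x by simp
    show "\<And>b. (\<Sum>a\<in>UNIV. \<Sum>c\<in>UNIV. ginv g x a c * (cd2 g Hh x c b a - cd2 g Hh x b c a))
        = (\<Sum>d\<in>UNIV. pd d Gam x * (\<Sum>f\<in>UNIV. ginv g x d f * ricci g x f b))" by (rule RE)
    show "\<And>b. pd b (divg g K) x = (\<Sum>a\<in>UNIV. \<Sum>c\<in>UNIV. ginv g x a c * cd2 g (cov_d g K) x b a c)" by (rule dD)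
    show "\<And>b. pd b (laplacian g Gam) x = (\<Sum>a\<in>UNIV. \<Sum>c\<in>UNIV. ginv g x a c * cd2 g Hh x b a c)" by (rule dL)
    show "\<And>a b. ricci g x a b = 1/2 * X x a * X x b - (cov_d g X x a b + cov_d g X x b a) / 2 + lam * g x a b" by (rule hR)
    show "\<And>c a b. cd2 g (ricci g) x c a b = 1/2 * (cov_d g X x c a * X x b + X x a * cov_d g X x c b)
        - (cd2 g (cov_d g X) x c a b + cd2 g (cov_d g X) x c b a) / 2" by (rule dR[OF x])
    show "\<And>b. 2 * (\<Sum>a\<in>UNIV. \<Sum>c\<in>UNIV. ginv g x a c * cd2 g (ricci g) x c a b)
        = (\<Sum>c\<in>UNIV. \<Sum>e\<in>UNIV. ginv g x c e * cd2 g (ricci g) x b c e)" by (rule contracted_bianchi[OF x])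
    show "Gam x \<noteq> 0" using Gam_pos x by force
  qed
  show ?thesis unfolding divV[OF x] gr using fa by (simp add: sym_cov_d_def)
qed

end

theorem mainTheorem2:
  fixes U :: "(real^'n) set"
    and g :: "real^'n \<Rightarrow> 'n \<Rightarrow> 'n \<Rightarrow> real"
    and X :: "real^'n \<Rightarrow> 'n \<Rightarrow> real"
    and Gam :: "real^'n \<Rightarrow> real"
    and lam :: real
    and K :: "real^'n \<Rightarrow> 'n \<Rightarrow> real"
  assumes metric: "riemannian_metric U g"
    and X_smooth: "\<forall>a. smooth_on U (\<lambda>x. X x a)"
    and Gam_smooth: "smooth_on U Gam"
    and Gam_pos: "\<forall>x\<in>U. Gam x > 0"
    and K_def: "\<forall>x a. K x a = Gam x * X x a + grad Gam x a"
    and ricci_eq: "\<forall>x\<in>U. \<forall>a b. ricci g x a b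
                     = (1/2) * X x a * X x b - sym_cov_d g X x a b + lam * g x a b"
  shows "\<forall>x\<in>U.
    (\<Sum>a\<in>UNIV. \<Sum>b\<in>UNIV. \<Sum>c\<in>UNIV. \<Sum>d\<in>UNIV. sym_cov_d g K x a b * ginv g x a c * ginv g x b d * cov_d g K x c d)
    = divg g (\<lambda>y a. (\<Sum>b\<in>UNIV. raise g K y b * sym_cov_d g K y a b)
                    - (1/2) * K y a * laplacian g Gam y
                    - (1/2) * K y a * divg g K y
                    - lam * Gam y * K y a) x
      + divg g K x *
        ( - (\<Sum>a\<in>UNIV. \<Sum>b\<in>UNIV. ginv g x a b * K x a * K x b) / (2 * Gam x)
          + (1/2) * laplacian g Gam x
          + (1/2) * divg g K x
          + (1 / (2 * Gam x)) * (\<Sum>c\<in>UNIV. raise g K x c * grad Gam x c)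
          + lam * Gam x)"
proof -
  interpret soliton U g X Gam lam K
    by (unfold_locales) (rule metric, rule X_smooth, rule Gam_smooth, rule Gam_pos, rule K_def, rule ricci_eq)
  show ?thesis using main_at by blast
qed


end
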